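(* Let $r\in\{1,\infty\}$, $N\in\{0,2,3,\ldots\}$, and let $(G,+,p)\in\mathfrak{G}_r(N)$ be a valued group with bounded value. Let $A$ be a nonempty subset of $G$ and $f\in E_r(A)$. If $N>2$, assume that $$\Bigl|p\Bigl(\sum_{k=1}^N a_k\Bigr)-f(a_N)\Bigr|\leqslant\sum_{k=1}^{N-1}f(a_k)\quad\text{for all }a_1,\ldots,a_N\in A.$$ Then there is a valued group $(\tilde G,+,\tilde p)\in\mathfrak{G}_r(N)$ with bounded value enlarging $(G,+,p)$ such that $f$ is trivial in $\tilde G$, i.e. there is $b\in\tilde G$ with $f(a)=\tilde p(a-b)$ for all $a\in A$. If, in addition, $Q\subseteq\mathbb{R}$ satisfies: $Q\cap[0,\infty)$ is dense in $[0,\infty)$, $0\in Q$, and $(Q\cap[0,\infty))+(Q\cap[0,\infty))\subseteq Q$, and moreover $G$ is finite and $p(G)\cup f(A)\subseteq Q$, then $\tilde G$ may be taken finite with $\tilde p(\tilde G)\subseteq Q$.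
   Context: All groups are Abelian. A value on $G$ is $p\colon G\to[0,\infty)$ with $p(x)=0\iff x=0$, $p(-x)=p(x)$, $p(x+y)\leqslant p(x)+p(y)$; it induces the metric $d(x,y)=p(x-y)$. Class $\mathcal{O}_0$: $\lim_n p(na)/n=0$ for all $a$. $\mathfrak{G}_r(N)$: separable valued Abelian groups of class $\mathcal{O}_0$ with $p\leqslant r$ (vacuous if $r=\infty$) and of exponent $N$ if $N\neq0$. For $A\subseteq G$, a Katětov map on $A$ is $f\colon A\to[0,\infty)$ with $|f(x)-f(y)|\leqslant d(x,y)\leqslant f(x)+f(y)$ for all $x,y\in A$; $E_r(A)$ is the set of Katětov maps on $A$ bounded by $r$. Enlarging means $G\subseteq\tilde G$ with addition and value extended. *)

theory Defs
  imports "HOL-Analysis.Analysis" "HOL-Algebra.FiniteProduct"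
begin

text \<open>Abelian groups are HOL-Algebra commutative groups (written multiplicatively:
  the group operation is the paper's addition, the unit is 0, inv x is -x).\<close>

definition is_value :: "('a, 'b) monoid_scheme \<Rightarrow> ('a \<Rightarrow> real) \<Rightarrow> bool" where
  "is_value G p \<longleftrightarrow>
     (\<forall>x\<in>carrier G. 0 \<le> p x) \<and>
     (\<forall>x\<in>carrier G. p x = 0 \<longleftrightarrow> x = \<one>\<^bsub>G\<^esub>) \<and>
     (\<forall>x\<in>carrier G. p (inv\<^bsub>G\<^esub> x) = p x) \<and>
     (\<forall>x\<in>carrier G. \<forall>y\<in>carrier G. p (x \<otimes>\<^bsub>G\<^esub> y) \<le> p x + p y)"

definition vdist :: "('a, 'b) monoid_scheme \<Rightarrow> ('a \<Rightarrow> real) \<Rightarrow> 'a \<Rightarrow> 'a \<Rightarrow> real" where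
  "vdist G p x y = p (x \<otimes>\<^bsub>G\<^esub> inv\<^bsub>G\<^esub> y)"

definition class_O0 :: "('a, 'b) monoid_scheme \<Rightarrow> ('a \<Rightarrow> real) \<Rightarrow> bool" where
  "class_O0 G p \<longleftrightarrow> (\<forall>a\<in>carrier G. (\<lambda>n::nat. p (a [^]\<^bsub>G\<^esub> n) / real n) \<longlonglongrightarrow> 0)"

definition vseparable :: "('a, 'b) monoid_scheme \<Rightarrow> ('a \<Rightarrow> real) \<Rightarrow> bool" where
  "vseparable G p \<longleftrightarrow> (\<exists>D. countable D \<and> D \<subseteq> carrier G \<and>
     (\<forall>x\<in>carrier G. \<forall>e>0. \<exists>y\<in>D. vdist G p x y < e))"

definition in_class_G :: "ereal \<Rightarrow> nat \<Rightarrow> ('a, 'b) monoid_scheme \<Rightarrow> ('a \<Rightarrow> real) \<Rightarrow> bool" where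
  "in_class_G r N G p \<longleftrightarrow>
     comm_group G \<and> is_value G p \<and> vseparable G p \<and> class_O0 G p \<and>
     (\<forall>x\<in>carrier G. ereal (p x) \<le> r) \<and>
     (N \<noteq> 0 \<longrightarrow> (\<forall>x\<in>carrier G. x [^]\<^bsub>G\<^esub> N = \<one>\<^bsub>G\<^esub>))"

definition bounded_value :: "('a, 'b) monoid_scheme \<Rightarrow> ('a \<Rightarrow> real) \<Rightarrow> bool" where
  "bounded_value G p \<longleftrightarrow> (\<exists>M. \<forall>x\<in>carrier G. p x \<le> M)"

definition katetov_on :: "('a, 'b) monoid_scheme \<Rightarrow> ('a \<Rightarrow> real) \<Rightarrow> 'a set \<Rightarrow> ('a \<Rightarrow> real) \<Rightarrow> bool" where
  "katetov_on G p A f \<longleftrightarrow> (\<forall>x\<in>A. 0 \<le> f x) \<and>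
     (\<forall>x\<in>A. \<forall>y\<in>A. \<bar>f x - f y\<bar> \<le> vdist G p x y \<and> vdist G p x y \<le> f x + f y)"

definition E_r :: "ereal \<Rightarrow> ('a, 'b) monoid_scheme \<Rightarrow> ('a \<Rightarrow> real) \<Rightarrow> 'a set \<Rightarrow> ('a \<Rightarrow> real) \<Rightarrow> bool" where
  "E_r r G p A f \<longleftrightarrow> katetov_on G p A f \<and> (\<forall>x\<in>A. ereal (f x) \<le> r)"

text \<open>H (on the type 'a + real) enlarges G: G is identified with Inl ` carrier G,
  and the addition and value of H extend those of G.\<close>
definition enlarges :: "('a + real) monoid \<Rightarrow> (('a + real) \<Rightarrow> real) \<Rightarrow> ('a, 'b) monoid_scheme \<Rightarrow> ('a \<Rightarrow> real) \<Rightarrow> bool" where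
  "enlarges H q G p \<longleftrightarrow> Inl ` carrier G \<subseteq> carrier H \<and>
     (\<forall>x\<in>carrier G. \<forall>y\<in>carrier G. Inl x \<otimes>\<^bsub>H\<^esub> Inl y = Inl (x \<otimes>\<^bsub>G\<^esub> y)) \<and>
     (\<forall>x\<in>carrier G. q (Inl x) = p x)"

end

theory Submission
  imports Defs "HOL-Algebra.Elementary_Groups"
begin


locale pseudo = comm_group P for P :: "'c monoid" (structure) +
  fixes q :: "'c \<Rightarrow> real"
  assumes q_nn: "x \<in> carrier P \<Longrightarrow> 0 \<le> q x"
  and q_inv: "x \<in> carrier P \<Longrightarrow> q (inv x) = q x"
  and q_sub: "x \<in> carrier P \<Longrightarrow> y \<in> carrier P \<Longrightarrow> q (x \<otimes> y) \<le> q x + q y"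
  and q_one: "q \<one> = 0"
begin

lemma q_cong:
  assumes x: "x \<in> carrier P" and y: "y \<in> carrier P" and e: "q (x \<otimes> inv y) = 0"
  shows "q x = q y"
proof -
  have "x = (x \<otimes> inv y) \<otimes> y" using x y by (simp add: m_assoc)
  hence 1: "q x \<le> q y" using q_sub[of "x \<otimes> inv y" y] x y e by simp
  have "y \<otimes> inv x = inv (x \<otimes> inv y)" using x y by (simp add: inv_mult m_comm)
  hence e2: "q (y \<otimes> inv x) = 0" using q_inv[of "x \<otimes> inv y"] x y e by simp
  have "y = (y \<otimes> inv x) \<otimes> x" using x y by (simp add: m_assoc)
  hence "q y \<le> q x" using q_sub[of "y \<otimes> inv x" x] x y e2 by simp
  with 1 show ?thesis by simp
qed

lemma rel_refl: "x \<in> carrier P \<Longrightarrow> q (x \<otimes> inv x) = 0"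
  by (simp add: q_one)

lemma rel_sym: assumes x: "x \<in> carrier P" and y: "y \<in> carrier P" and e: "q (x \<otimes> inv y) = 0"
  shows "q (y \<otimes> inv x) = 0"
proof -
  have "y \<otimes> inv x = inv (x \<otimes> inv y)" using x y by (simp add: inv_mult m_comm)
  then show ?thesis using q_inv[of "x \<otimes> inv y"] x y e by simp
qed

lemma rel_trans: assumes x: "x \<in> carrier P" and y: "y \<in> carrier P" and z: "z \<in> carrier P"
  and e: "q (x \<otimes> inv y) = 0" and e2: "q (y \<otimes> inv z) = 0"
  shows "q (x \<otimes> inv z) = 0"
proof -
  have "x \<otimes> inv z = (x \<otimes> inv y) \<otimes> (y \<otimes> inv z)" using x y z by (metis inv_closed l_inv l_one m_assoc m_closed)
  then have "q (x \<otimes> inv z) \<le> 0" using q_sub[of "x \<otimes> inv y" "y \<otimes> inv z"] x y z e e2 by simp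
  moreover have "0 \<le> q (x \<otimes> inv z)" using x z q_nn by simp
  ultimately show ?thesis by simp
qed

end

locale pquot = pseudo P q for P :: "'c monoid" (structure) and q +
  fixes enc :: "'c \<Rightarrow> 'd"
  assumes enc_eq: "x \<in> carrier P \<Longrightarrow> y \<in> carrier P \<Longrightarrow> enc x = enc y \<longleftrightarrow> q (x \<otimes> inv y) = 0"
begin

definition dec where "dec u = (SOME x. x \<in> carrier P \<and> enc x = u)"
definition HQ :: "'d monoid" where
  "HQ = \<lparr>carrier = enc ` carrier P, mult = (\<lambda>u v. enc (dec u \<otimes> dec v)), one = enc \<one>\<rparr>"
definition qQ where "qQ u = q (dec u)"

lemma enc_cong: "x \<in> carrier P \<Longrightarrow> y \<in> carrier P \<Longrightarrow> enc x = enc y \<Longrightarrow> q x = q y"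
  using enc_eq q_cong by blast

lemma dec_enc: assumes "x \<in> carrier P" shows "dec (enc x) \<in> carrier P" "enc (dec (enc x)) = enc x"
proof -
  have "\<exists>y. y \<in> carrier P \<and> enc y = enc x" using assms by blast
  then have "dec (enc x) \<in> carrier P \<and> enc (dec (enc x)) = enc x"
    unfolding dec_def by (rule someI_ex)
  then show "dec (enc x) \<in> carrier P" "enc (dec (enc x)) = enc x" by auto
qed

lemma enc_mult_cong:
  assumes x: "x \<in> carrier P" "x' \<in> carrier P" and y: "y \<in> carrier P" "y' \<in> carrier P"
    and ex: "enc x = enc x'" and ey: "enc y = enc y'"
  shows "enc (x \<otimes> y) = enc (x' \<otimes> y')"
proof -
  have "(x \<otimes> y) \<otimes> inv (x' \<otimes> y') = (x \<otimes> inv x') \<otimes> (y \<otimes> inv y')"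
    using x y by (simp add: inv_mult m_ac)
  moreover have "q (x \<otimes> inv x') = 0" "q (y \<otimes> inv y') = 0" using enc_eq x y ex ey by auto
  ultimately have "q ((x \<otimes> y) \<otimes> inv (x' \<otimes> y')) \<le> 0"
    using q_sub[of "x \<otimes> inv x'" "y \<otimes> inv y'"] x y by simp
  moreover have "0 \<le> q ((x \<otimes> y) \<otimes> inv (x' \<otimes> y'))" using x y by (intro q_nn) auto
  ultimately show ?thesis using enc_eq x y by simp
qed

lemma enc_mult: "x \<in> carrier P \<Longrightarrow> y \<in> carrier P \<Longrightarrow> enc x \<otimes>\<^bsub>HQ\<^esub> enc y = enc (x \<otimes> y)"
proof -
  assume x: "x \<in> carrier P" and y: "y \<in> carrier P"
  have "enc x \<otimes>\<^bsub>HQ\<^esub> enc y = enc (dec (enc x) \<otimes> dec (enc y))" by (simp add: HQ_def)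
  also have "\<dots> = enc (x \<otimes> y)"
    by (rule enc_mult_cong) (use x y dec_enc in auto)
  finally show ?thesis .
qed

lemma carrier_HQ: "carrier HQ = enc ` carrier P" by (simp add: HQ_def)
lemma one_HQ: "\<one>\<^bsub>HQ\<^esub> = enc \<one>" by (simp add: HQ_def)

lemma HQ_comm_group: "comm_group HQ"
proof (rule comm_groupI)
  show "\<And>x y. x \<in> carrier HQ \<Longrightarrow> y \<in> carrier HQ \<Longrightarrow> x \<otimes>\<^bsub>HQ\<^esub> y \<in> carrier HQ"
    by (auto simp: carrier_HQ enc_mult)
  show "\<one>\<^bsub>HQ\<^esub> \<in> carrier HQ" by (simp add: carrier_HQ one_HQ)
  show "\<And>x y z. x \<in> carrier HQ \<Longrightarrow> y \<in> carrier HQ \<Longrightarrow> z \<in> carrier HQ \<Longrightarrow>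
     x \<otimes>\<^bsub>HQ\<^esub> y \<otimes>\<^bsub>HQ\<^esub> z = x \<otimes>\<^bsub>HQ\<^esub> (y \<otimes>\<^bsub>HQ\<^esub> z)"
    by (auto simp: carrier_HQ enc_mult m_assoc)
  show "\<And>x y. x \<in> carrier HQ \<Longrightarrow> y \<in> carrier HQ \<Longrightarrow> x \<otimes>\<^bsub>HQ\<^esub> y = y \<otimes>\<^bsub>HQ\<^esub> x"
    by (auto simp: carrier_HQ enc_mult m_comm)
  show "\<And>x. x \<in> carrier HQ \<Longrightarrow> \<one>\<^bsub>HQ\<^esub> \<otimes>\<^bsub>HQ\<^esub> x = x"
    by (auto simp: carrier_HQ enc_mult one_HQ)
  show "\<And>x. x \<in> carrier HQ \<Longrightarrow> \<exists>y\<in>carrier HQ. y \<otimes>\<^bsub>HQ\<^esub> x = \<one>\<^bsub>HQ\<^esub>"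
  proof -
    fix u assume "u \<in> carrier HQ"
    then obtain x where x: "x \<in> carrier P" "u = enc x" by (auto simp: carrier_HQ)
    then show "\<exists>y\<in>carrier HQ. y \<otimes>\<^bsub>HQ\<^esub> u = \<one>\<^bsub>HQ\<^esub>"
      by (intro bexI[of _ "enc (inv x)"]) (auto simp: carrier_HQ enc_mult one_HQ)
  qed
qed

lemma inv_HQ: assumes "x \<in> carrier P" shows "inv\<^bsub>HQ\<^esub> (enc x) = enc (inv x)"
proof -
  interpret H: comm_group HQ by (rule HQ_comm_group)
  show ?thesis
    by (rule H.inv_equality) (use assms in \<open>auto simp: carrier_HQ enc_mult one_HQ\<close>)
qed

lemma pow_HQ: assumes "x \<in> carrier P" shows "enc x [^]\<^bsub>HQ\<^esub> (n::nat) = enc (x [^] n)"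
proof (induction n)
  case 0 then show ?case by (simp add: one_HQ)
next
  case (Suc n) then show ?case using assms by (simp add: enc_mult)
qed

lemma qQ_enc: "x \<in> carrier P \<Longrightarrow> qQ (enc x) = q x"
  unfolding qQ_def using dec_enc enc_cong by metis

lemma qQ_nn: "u \<in> carrier HQ \<Longrightarrow> 0 \<le> qQ u"
  by (auto simp: carrier_HQ qQ_enc q_nn)

lemma HQ_value: "is_value HQ qQ"
  unfolding is_value_def
proof (intro conjI ballI)
  fix u assume "u \<in> carrier HQ"
  then obtain x where x: "x \<in> carrier P" "u = enc x" by (auto simp: carrier_HQ)
  show "0 \<le> qQ u" using x by (simp add: qQ_enc q_nn)
  show "(qQ u = 0) = (u = \<one>\<^bsub>HQ\<^esub>)" using x enc_eq[of x \<one>] by (simp add: qQ_enc one_HQ)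
  show "qQ (inv\<^bsub>HQ\<^esub> u) = qQ u" using x by (simp add: qQ_enc inv_HQ q_inv)
  fix v assume "v \<in> carrier HQ"
  then obtain y where y: "y \<in> carrier P" "v = enc y" by (auto simp: carrier_HQ)
  show "qQ (u \<otimes>\<^bsub>HQ\<^esub> v) \<le> qQ u + qQ v" using x y by (simp add: qQ_enc enc_mult q_sub)
qed

end



locale vg = comm_group G for G :: "'a monoid" (structure) + fixes p :: "'a \<Rightarrow> real"
  assumes val: "is_value G p"
begin
lemma p_nn: "x \<in> carrier G \<Longrightarrow> 0 \<le> p x" using val unfolding is_value_def by auto
lemma p_zero: "x \<in> carrier G \<Longrightarrow> p x = 0 \<longleftrightarrow> x = \<one>" using val unfolding is_value_def by auto
lemma p_inv: "x \<in> carrier G \<Longrightarrow> p (inv x) = p x" using val unfolding is_value_def by auto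
lemma p_sub: "x \<in> carrier G \<Longrightarrow> y \<in> carrier G \<Longrightarrow> p (x \<otimes> y) \<le> p x + p y"
  using val unfolding is_value_def by auto
lemma p_one: "p \<one> = 0" using p_zero by simp
lemma p_swap: "x \<in> carrier G \<Longrightarrow> y \<in> carrier G \<Longrightarrow> p (x \<otimes> inv y) = p (y \<otimes> inv x)"
  by (metis inv_closed inv_inv inv_mult_group m_closed p_inv)
end

definition PG :: "'a monoid \<Rightarrow> nat \<Rightarrow> ('a \<times> int) monoid" where "PG G m = G \<times>\<times> integer_mod_group m"

lemma carrier_PG: "carrier (PG G m) = carrier G \<times> carrier (integer_mod_group m)"
  by (simp add: PG_def)

lemma mult_PG: "(g, k) \<otimes>\<^bsub>PG G m\<^esub> (h, l) = (g \<otimes>\<^bsub>G\<^esub> h, (k + l) mod int m)"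
  by (simp add: PG_def)

lemma one_PG: "\<one>\<^bsub>PG G m\<^esub> = (\<one>\<^bsub>G\<^esub>, 0)"
  by (simp add: PG_def)

lemma PG_comm_group: assumes "comm_group G" shows "comm_group (PG G m)"
proof -
  interpret comm_group G by fact
  show ?thesis unfolding PG_def
    apply (rule group.group_comm_groupI)
     apply (rule DirProd_group) apply (simp add: is_group) apply simp
    by (auto simp: m_comm add.commute)
qed

lemma inv_PG: "comm_group G \<Longrightarrow> g \<in> carrier G \<Longrightarrow> k \<in> carrier (integer_mod_group m) \<Longrightarrow>
   inv\<^bsub>PG G m\<^esub> (g, k) = (inv\<^bsub>G\<^esub> g, (-k) mod int m)"
  unfolding PG_def by (subst inv_DirProd) (auto simp: comm_group.axioms(2))

lemma pow_PG: "comm_group G \<Longrightarrow> g \<in> carrier G \<Longrightarrow>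
   (g, k) [^]\<^bsub>PG G m\<^esub> (n::nat) = (g [^]\<^bsub>G\<^esub> n, (int n * k) mod int m)"
proof (induction n)
  case 0 then show ?case by (simp add: one_PG)
next
  case (Suc n)
  then show ?case by (simp add: mult_PG mod_add_left_eq mod_add_right_eq distrib_right add.commute)
qed

lemma mod_carrier: "k mod int m \<in> carrier (integer_mod_group m)"
  by (simp add: carrier_integer_mod_group)

lemma carrier_mod: "k \<in> carrier (integer_mod_group m) \<Longrightarrow> k mod int m = k"
  by (auto simp: carrier_integer_mod_group split: if_splits)

locale ext = vg G p for G (structure) and p +
  fixes m :: nat and q :: "'a \<times> int \<Rightarrow> real" and code :: "'a \<times> int \<Rightarrow> real" and M :: real
  assumes ps: "pseudo (PG G m) q"
  and q_G: "g \<in> carrier G \<Longrightarrow> q (g, 0) = p g"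
  and q_le: "x \<in> carrier (PG G m) \<Longrightarrow> q x \<le> M"
  and code_inj: "inj_on code (carrier (PG G m))"
begin

abbreviation PP where "PP \<equiv> PG G m"

definition rel where "rel x y \<longleftrightarrow> q (x \<otimes>\<^bsub>PP\<^esub> inv\<^bsub>PP\<^esub> y) = 0"

definition enc where "enc x = (if \<exists>g\<in>carrier G. rel x (g,0)
   then Inl (SOME g. g\<in>carrier G \<and> rel x (g,0))
   else Inr (code (SOME y. y \<in> carrier PP \<and> rel x y)))"

lemma G0_in: "g \<in> carrier G \<Longrightarrow> (g, 0) \<in> carrier PP"
  by (simp add: carrier_PG)

lemma rel_G: assumes "g \<in> carrier G" "h \<in> carrier G" shows "rel (g,0) (h,0) \<longleftrightarrow> g = h"
proof -
  have "(g,0) \<otimes>\<^bsub>PG G m\<^esub> inv\<^bsub>PG G m\<^esub> (h,0) = (g \<otimes> inv h, 0)"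
    using assms by (simp add: inv_PG mult_PG comm_group_axioms)
  moreover have "g \<otimes> inv h = \<one> \<longleftrightarrow> g = h"
    using assms by (metis inv_closed inv_inv r_inv m_comm inv_equality)
  ultimately show ?thesis using assms by (simp add: rel_def q_G p_zero)
qed

lemma rel_refl': "x \<in> carrier PP \<Longrightarrow> rel x x"
  unfolding rel_def by (rule pseudo.rel_refl[OF ps])
lemma rel_sym': "x \<in> carrier PP \<Longrightarrow> y \<in> carrier PP \<Longrightarrow> rel x y \<Longrightarrow> rel y x"
  unfolding rel_def by (rule pseudo.rel_sym[OF ps])
lemma rel_trans': "x \<in> carrier PP \<Longrightarrow> y \<in> carrier PP \<Longrightarrow> z \<in> carrier PP \<Longrightarrow> rel x y \<Longrightarrow> rel y z \<Longrightarrow> rel x z"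
  unfolding rel_def by (rule pseudo.rel_trans[OF ps])

lemma enc_eq': assumes x: "x \<in> carrier PP" and y: "y \<in> carrier PP"
  shows "enc x = enc y \<longleftrightarrow> rel x y"
proof
  assume r: "rel x y"
  have eqv: "\<And>z. z \<in> carrier PP \<Longrightarrow> rel x z \<longleftrightarrow> rel y z"
    using r x y rel_sym' rel_trans' by blast
  have eqg: "\<And>g. g \<in> carrier G \<Longrightarrow> rel x (g,0) \<longleftrightarrow> rel y (g,0)"
    using eqv G0_in by blast
  have "(\<exists>g\<in>carrier G. rel x (g,0)) \<longleftrightarrow> (\<exists>g\<in>carrier G. rel y (g,0))"
    using eqg by blast
  moreover have "(SOME g. g\<in>carrier G \<and> rel x (g,0)) = (SOME g. g\<in>carrier G \<and> rel y (g,0))"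
    by (rule arg_cong[where f=Eps]) (use eqg in blast)
  moreover have "(SOME z. z\<in>carrier PP \<and> rel x z) = (SOME z. z\<in>carrier PP \<and> rel y z)"
    by (rule arg_cong[where f=Eps]) (use eqv in blast)
  ultimately show "enc x = enc y" unfolding enc_def by simp
next
  assume e: "enc x = enc y"
  show "rel x y"
  proof (cases "\<exists>g\<in>carrier G. rel x (g,0)")
    case True
    hence T2: "\<exists>g\<in>carrier G. rel y (g,0)"
      using e unfolding enc_def by (auto split: if_splits)
    define g1 where "g1 = (SOME g. g\<in>carrier G \<and> rel x (g,0))"
    define g2 where "g2 = (SOME g. g\<in>carrier G \<and> rel y (g,0))"
    have g1: "g1 \<in> carrier G \<and> rel x (g1,0)" unfolding g1_def using True by (metis (mono_tags, lifting) someI_ex)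
    have g2: "g2 \<in> carrier G \<and> rel y (g2,0)" unfolding g2_def using T2 by (metis (mono_tags, lifting) someI_ex)
    have "g1 = g2" using e True T2 unfolding enc_def g1_def g2_def by simp
    then show ?thesis using g1 g2 x y G0_in rel_sym' rel_trans' by metis
  next
    case False
    hence F2: "\<not> (\<exists>g\<in>carrier G. rel y (g,0))"
      using e unfolding enc_def by (auto split: if_splits)
    define z1 where "z1 = (SOME z. z\<in>carrier PP \<and> rel x z)"
    define z2 where "z2 = (SOME z. z\<in>carrier PP \<and> rel y z)"
    have z1: "z1 \<in> carrier PP \<and> rel x z1" unfolding z1_def using x rel_refl' by (metis (mono_tags, lifting) someI_ex)
    have z2: "z2 \<in> carrier PP \<and> rel y z2" unfolding z2_def using y rel_refl' by (metis (mono_tags, lifting) someI_ex)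
    have "code z1 = code z2" using e False F2 unfolding enc_def z1_def z2_def by simp
    hence "z1 = z2" using code_inj z1 z2 by (auto dest: inj_onD)
    then show ?thesis using z1 z2 x y rel_sym' rel_trans' by metis
  qed
qed

lemma enc_G: assumes g: "g \<in> carrier G" shows "enc (g, 0) = Inl g"
proof -
  have "(SOME h. h\<in>carrier G \<and> rel (g,0) (h,0)) = g"
  proof (rule some_equality)
    show "g \<in> carrier G \<and> rel (g, 0) (g, 0)" using g rel_G[of g g] by simp
    show "\<And>h. h \<in> carrier G \<and> rel (g, 0) (h, 0) \<Longrightarrow> h = g" using g rel_G by blast
  qed
  moreover have "\<exists>h\<in>carrier G. rel (g,0) (h,0)" using g rel_G[of g g] by blast
  ultimately show ?thesis unfolding enc_def by simp
qed

end

sublocale ext \<subseteq> Q: pquot "PG G m" q enc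
  by (intro pquot.intro ps pquot_axioms.intro) (simp add: enc_eq' rel_def)




context ext begin

lemma PP_comm: "comm_group PP" by (rule PG_comm_group[OF comm_group_axioms])

lemma qQ_le: "u \<in> carrier Q.HQ \<Longrightarrow> Q.qQ u \<le> M"
  by (auto simp: Q.carrier_HQ Q.qQ_enc q_le)

lemma Inl_enc: "g \<in> carrier G \<Longrightarrow> Inl g = enc (g, 0)" by (simp add: enc_G)

lemma triv_formula: assumes a: "a \<in> carrier G" and y: "y \<in> carrier PP"
  shows "Q.qQ (Inl a \<otimes>\<^bsub>Q.HQ\<^esub> inv\<^bsub>Q.HQ\<^esub> enc y) = q ((a,0) \<otimes>\<^bsub>PP\<^esub> inv\<^bsub>PP\<^esub> y)"
proof -
  interpret P: comm_group PP by (rule PP_comm)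
  have a0: "(a,0) \<in> carrier PP" using a by (rule G0_in)
  show ?thesis using a a0 y
    by (simp add: Inl_enc Q.inv_HQ Q.enc_mult Q.qQ_enc)
qed

lemma finite_HQ: "finite (carrier G) \<Longrightarrow> 0 < m \<Longrightarrow> finite (carrier Q.HQ)"
  by (simp add: Q.carrier_HQ carrier_PG carrier_integer_mod_group)

lemma values_HQ: "Q.qQ ` carrier Q.HQ = q ` carrier PP"
  by (force simp: Q.carrier_HQ Q.qQ_enc)

lemma ext_main:
  assumes sep: "vseparable G p" and Mr: "ereal M \<le> r"
  and expo: "N \<noteq> 0 \<Longrightarrow> (\<forall>x\<in>carrier G. x [^] N = \<one>) \<and> m dvd N"
  shows "in_class_G r N Q.HQ Q.qQ \<and> bounded_value Q.HQ Q.qQ \<and> enlarges Q.HQ Q.qQ G p"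
proof -
  interpret P: comm_group PP by (rule PP_comm)
  interpret H: comm_group Q.HQ by (rule Q.HQ_comm_group)
  have bnd: "bounded_value Q.HQ Q.qQ" unfolding bounded_value_def using qQ_le by blast
  have enl: "enlarges Q.HQ Q.qQ G p" unfolding enlarges_def
  proof (intro conjI ballI)
    show "Inl ` carrier G \<subseteq> carrier Q.HQ"
      by (auto simp: Inl_enc Q.carrier_HQ intro: G0_in)
    fix x assume x: "x \<in> carrier G"
    show "Q.qQ (Inl x) = p x" using x by (simp add: Inl_enc Q.qQ_enc G0_in q_G)
    fix y assume y: "y \<in> carrier G"
    show "Inl x \<otimes>\<^bsub>Q.HQ\<^esub> Inl y = Inl (x \<otimes> y)"
      using x y by (simp add: Inl_enc Q.enc_mult G0_in mult_PG)
  qed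
  have sepH: "vseparable Q.HQ Q.qQ"
  proof -
    obtain D where D: "countable D" "D \<subseteq> carrier G"
      "\<And>x e. x \<in> carrier G \<Longrightarrow> e > 0 \<Longrightarrow> \<exists>y\<in>D. vdist G p x y < e"
      using sep unfolding vseparable_def by blast
    define D' where "D' = enc ` (D \<times> carrier (integer_mod_group m))"
    have "countable D'" unfolding D'_def
      by (intro countable_image countable_SIGMA D(1) countableI_type)
    moreover have "D' \<subseteq> carrier Q.HQ" using D(2) by (auto simp: D'_def Q.carrier_HQ carrier_PG)
    moreover have "\<exists>y\<in>D'. vdist Q.HQ Q.qQ u y < e" if u: "u \<in> carrier Q.HQ" and e: "e > 0" for u e
    proof -
      obtain g k where gk: "g \<in> carrier G" "k \<in> carrier (integer_mod_group m)" "u = enc (g,k)"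
        using u by (auto simp: Q.carrier_HQ carrier_PG)
      obtain d where d: "d \<in> D" "vdist G p g d < e" using D(3)[OF gk(1) e] by blast
      have dG: "d \<in> carrier G" using d D(2) by auto
      have "(g,k) \<otimes>\<^bsub>PP\<^esub> inv\<^bsub>PP\<^esub> (d,k) = (g \<otimes> inv d, 0)"
        using gk dG by (simp add: inv_PG comm_group_axioms mult_PG mod_add_right_eq)
      moreover have dk: "(d,k) \<in> carrier PP" "(g,k) \<in> carrier PP" using dG gk by (auto simp: carrier_PG)
      ultimately have "vdist Q.HQ Q.qQ u (enc (d,k)) = p (g \<otimes> inv d)"
        using gk dG unfolding vdist_def
        by (simp add: Q.inv_HQ Q.enc_mult[OF dk(2) Q.inv_closed[OF dk(1)]] Q.qQ_enc carrier_PG q_G)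
      then show ?thesis using d gk unfolding D'_def vdist_def by force
    qed
    ultimately show ?thesis unfolding vseparable_def by blast
  qed
  have O0: "class_O0 Q.HQ Q.qQ" unfolding class_O0_def
  proof
    fix a assume a: "a \<in> carrier Q.HQ"
    have L: "(\<lambda>n. M / real n) \<longlonglongrightarrow> 0" by (rule lim_const_over_n)
    have E1: "\<forall>\<^sub>F n in sequentially. 0 \<le> Q.qQ (a [^]\<^bsub>Q.HQ\<^esub> n) / real n"
      using a by (intro always_eventually allI divide_nonneg_nonneg Q.qQ_nn H.nat_pow_closed) auto
    have E2: "\<forall>\<^sub>F n in sequentially. Q.qQ (a [^]\<^bsub>Q.HQ\<^esub> n) / real n \<le> M / real n"
      using a by (intro always_eventually allI divide_right_mono qQ_le H.nat_pow_closed) auto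
    show "(\<lambda>n. Q.qQ (a [^]\<^bsub>Q.HQ\<^esub> n) / real n) \<longlonglongrightarrow> 0"
      by (rule tendsto_sandwich[OF E1 E2 tendsto_const L])
  qed
  have rb: "\<forall>x\<in>carrier Q.HQ. ereal (Q.qQ x) \<le> r"
    using qQ_le Mr by (meson ereal_less_eq(3) order_trans)
  have ex: "N \<noteq> 0 \<longrightarrow> (\<forall>x\<in>carrier Q.HQ. x [^]\<^bsub>Q.HQ\<^esub> N = \<one>\<^bsub>Q.HQ\<^esub>)"
  proof (intro impI ballI)
    assume N: "N \<noteq> 0"
    fix u assume "u \<in> carrier Q.HQ"
    then obtain g k where gk: "g \<in> carrier G" "k \<in> carrier (integer_mod_group m)" "u = enc (g,k)"
      by (auto simp: Q.carrier_HQ carrier_PG)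
    have "(int N * k) mod int m = 0" using expo N by auto
    then have "(g,k) [^]\<^bsub>PP\<^esub> N = \<one>\<^bsub>PP\<^esub>"
      using gk expo N by (simp add: pow_PG comm_group_axioms one_PG)
    then show "u [^]\<^bsub>Q.HQ\<^esub> N = \<one>\<^bsub>Q.HQ\<^esub>"
      using gk by (simp add: Q.pow_HQ carrier_PG Q.one_HQ)
  qed
  show ?thesis unfolding in_class_G_def
    using Q.HQ_comm_group Q.HQ_value sepH O0 rb ex bnd enl by blast
qed

end



locale wd = vg G p for G (structure) and p +
  fixes A :: "'a set" and f :: "'a \<Rightarrow> real" and m :: nat and M :: real
  assumes A_sub: "A \<subseteq> carrier G" and A_ne: "A \<noteq> {}"
  and f_nn: "a \<in> A \<Longrightarrow> 0 \<le> f a"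
  and kat1: "a \<in> A \<Longrightarrow> b \<in> A \<Longrightarrow> f a \<le> p (a \<otimes> inv b) + f b"
  and kat2: "a \<in> A \<Longrightarrow> b \<in> A \<Longrightarrow> p (a \<otimes> inv b) \<le> f a + f b"
  and f_le: "a \<in> A \<Longrightarrow> f a \<le> M"
  and p_le: "x \<in> carrier G \<Longrightarrow> p x \<le> M"
  and M_nn: "0 \<le> M"
  and m1: "m \<noteq> 1"
begin

definition sgl :: "'a \<times> bool \<Rightarrow> 'a" where "sgl x = (if snd x then fst x else inv (fst x))"
definition sgn1 :: "'a \<times> bool \<Rightarrow> int" where "sgn1 x = (if snd x then 1 else -1)"
definition sg :: "('a \<times> bool) list \<Rightarrow> int" where "sg w = sum_list (map sgn1 w)"
definition el :: "('a \<times> bool) list \<Rightarrow> 'a" where "el w = foldr (\<lambda>x acc. sgl x \<otimes> acc) w \<one>"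
definition wt :: "('a \<times> bool) list \<Rightarrow> real" where "wt w = sum_list (map (\<lambda>x. f (fst x)) w)"
definition wdd :: "('a \<times> bool) list \<Rightarrow> bool" where "wdd w \<longleftrightarrow> (\<forall>x\<in>set w. fst x \<in> A)"
definition negw :: "('a \<times> bool) list \<Rightarrow> ('a \<times> bool) list" where "negw w = map (\<lambda>x. (fst x, \<not> snd x)) w"
definition allpos :: "('a \<times> bool) list \<Rightarrow> bool" where "allpos w \<longleftrightarrow> (\<forall>x\<in>set w. snd x)"

lemma el_Nil[simp]: "el [] = \<one>" by (simp add: el_def)
lemma el_Cons[simp]: "el (x # w) = sgl x \<otimes> el w" by (simp add: el_def)
lemma wt_Nil[simp]: "wt [] = 0" by (simp add: wt_def)
lemma wt_Cons[simp]: "wt (x # w) = f (fst x) + wt w" by (simp add: wt_def)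
lemma sg_Nil[simp]: "sg [] = 0" by (simp add: sg_def)
lemma sg_Cons[simp]: "sg (x # w) = sgn1 x + sg w" by (simp add: sg_def)
lemma wdd_Nil[simp]: "wdd []" by (simp add: wdd_def)
lemma wdd_Cons[simp]: "wdd (x # w) \<longleftrightarrow> fst x \<in> A \<and> wdd w" by (simp add: wdd_def)

lemma sgl_closed: "fst x \<in> A \<Longrightarrow> sgl x \<in> carrier G"
  using A_sub by (auto simp: sgl_def)

lemma el_closed: "wdd w \<Longrightarrow> el w \<in> carrier G"
  by (induction w) (auto intro: sgl_closed)

lemma wt_nn: "wdd w \<Longrightarrow> 0 \<le> wt w"
  by (induction w) (auto simp: add_nonneg_nonneg f_nn)

lemma el_append: "wdd u \<Longrightarrow> wdd v \<Longrightarrow> el (u @ v) = el u \<otimes> el v"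
  by (induction u) (auto simp: m_assoc el_closed sgl_closed)
lemma wt_append: "wt (u @ v) = wt u + wt v" by (simp add: wt_def)
lemma sg_append: "sg (u @ v) = sg u + sg v" by (simp add: sg_def)
lemma wdd_append: "wdd (u @ v) \<longleftrightarrow> wdd u \<and> wdd v" by (auto simp: wdd_def)

lemma wdd_remove1: "wdd w \<Longrightarrow> wdd (remove1 x w)"
  using set_remove1_subset unfolding wdd_def by fastforce

lemma el_remove1: "wdd w \<Longrightarrow> x \<in> set w \<Longrightarrow> el w = sgl x \<otimes> el (remove1 x w)"
proof (induction w)
  case Nil then show ?case by simp
next
  case (Cons y w)
  show ?case
  proof (cases "x = y")
    case True then show ?thesis by simp
  next
    case False
    then have xw: "x \<in> set w" using Cons by simp
    have wd: "wdd w" "fst y \<in> A" "fst x \<in> A" using Cons xw unfolding wdd_def by auto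
    have "el (y # w) = sgl y \<otimes> (sgl x \<otimes> el (remove1 x w))" using Cons.IH wd xw by simp
    also have "\<dots> = sgl x \<otimes> (sgl y \<otimes> el (remove1 x w))"
      using wd by (simp add: m_lcomm sgl_closed el_closed wdd_remove1)
    finally show ?thesis using False by simp
  qed
qed

lemma wt_remove1: "x \<in> set w \<Longrightarrow> wt w = f (fst x) + wt (remove1 x w)"
  unfolding wt_def by (rule sum_list_map_remove1)
lemma sg_remove1: "x \<in> set w \<Longrightarrow> sg w = sgn1 x + sg (remove1 x w)"
  unfolding sg_def by (rule sum_list_map_remove1)

lemma negw_props: "wdd w \<Longrightarrow> wdd (negw w) \<and> el (negw w) = inv (el w) \<and> wt (negw w) = wt w \<and>
   sg (negw w) = - sg w \<and> length (negw w) = length w"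
proof (induction w)
  case Nil then show ?case by (simp add: negw_def)
next
  case (Cons x w)
  then have IH: "wdd (negw w) \<and> el (negw w) = inv (el w) \<and> wt (negw w) = wt w \<and>
   sg (negw w) = - sg w \<and> length (negw w) = length w" and xA: "fst x \<in> A" and wd: "wdd w" by auto
  have xc: "fst x \<in> carrier G" using xA A_sub by auto
  have "el (negw (x # w)) = sgl (fst x, \<not> snd x) \<otimes> inv (el w)" using IH by (simp add: negw_def)
  also have "\<dots> = inv (el (x # w))"
    using xc el_closed[OF wd] by (simp add: sgl_def inv_mult m_comm)
  finally show ?case using IH xA by (simp add: negw_def sgn1_def)
qed

lemma allpos_sg: "allpos w \<Longrightarrow> sg w = int (length w)"
  by (induction w) (auto simp: allpos_def sgn1_def)

lemma allpos_negw: "\<forall>x\<in>set w. \<not> snd x \<Longrightarrow> allpos (negw w)"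
  by (auto simp: allpos_def negw_def)

lemma allpos_take: "allpos w \<Longrightarrow> allpos (take n w)" by (auto simp: allpos_def dest: in_set_takeD)
lemma allpos_drop: "allpos w \<Longrightarrow> allpos (drop n w)" by (auto simp: allpos_def dest: in_set_dropD)
lemma wdd_take: "wdd w \<Longrightarrow> wdd (take n w)" by (auto simp: wdd_def dest: in_set_takeD)
lemma wdd_drop: "wdd w \<Longrightarrow> wdd (drop n w)" by (auto simp: wdd_def dest: in_set_dropD)

end



locale wdk = wd +
  assumes BLK: "0 < m \<Longrightarrow> wdd u \<Longrightarrow> length u = m \<Longrightarrow> allpos u \<Longrightarrow> p (el u) \<le> wt u \<or> M \<le> wt u"
  and CO: "0 < m \<Longrightarrow> wdd u \<Longrightarrow> length u = m - 1 \<Longrightarrow> allpos u \<Longrightarrow> a \<in> A \<Longrightarrow> f a \<le> p (a \<otimes> el u) + wt u"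
begin

lemma split_block: assumes "wdd w" "allpos w" "m \<le> length w"
  shows "w = take m w @ drop m w" "wdd (take m w)" "wdd (drop m w)" "allpos (take m w)" "allpos (drop m w)"
    "length (take m w) = m" "length (drop m w) = length w - m"
    "el w = el (take m w) \<otimes> el (drop m w)" "wt w = wt (take m w) + wt (drop m w)"
  using assms by (auto simp: wdd_take wdd_drop allpos_take allpos_drop
      el_append[symmetric] wt_append[symmetric])

lemma K0pos: "wdd w \<Longrightarrow> allpos w \<Longrightarrow> int m dvd int (length w) \<Longrightarrow> p (el w) \<le> wt w \<or> M \<le> wt w"
proof (induction "length w" arbitrary: w rule: less_induct)
  case less
  show ?case
  proof (cases "w = []")
    case True then show ?thesis by (simp add: p_one)
  next
    case False
    have "int m dvd int (length w)" using less.prems(3) by simp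
    then have dv: "m dvd length w" by simp
    have m0: "0 < m" "m \<le> length w" using dv False by (auto intro: dvd_imp_le intro!: Nat.gr0I)
    note S = split_block[OF less.prems(1,2) m0(2)]
    have "int m dvd int (length (drop m w))" using S(7) less.prems(3) m0
      by (simp add: of_nat_diff)
    then have IH: "p (el (drop m w)) \<le> wt (drop m w) \<or> M \<le> wt (drop m w)"
      using less.hyps[of "drop m w"] S m0 by simp
    have B: "p (el (take m w)) \<le> wt (take m w) \<or> M \<le> wt (take m w)"
      using BLK m0 S by blast
    have sub: "p (el w) \<le> p (el (take m w)) + p (el (drop m w))"
      using S(8) el_closed S(2,3) p_sub by simp
    have nn: "0 \<le> wt (take m w)" "0 \<le> wt (drop m w)" using wt_nn S(2,3) by auto
    show ?thesis using IH B sub nn S(9) by linarith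
  qed
qed

lemma arith1: assumes "int m dvd (int L - 1)" "L \<noteq> 1" shows "0 < m \<and> m \<le> L"
proof (cases "L = 0")
  case True
  then have "int m dvd 1" using assms(1) by simp
  then have "m = 1" by simp
  then show ?thesis using m1 by simp
next
  case False
  then have pos: "0 < int L - 1" using assms(2) by simp
  then have "int m \<le> int L - 1" using assms(1) zdvd_imp_le by blast
  moreover have "m \<noteq> 0"
  proof
    assume "m = 0" with assms(1) pos show False by simp
  qed
  ultimately show ?thesis by simp
qed

lemma arith2: assumes "int m dvd (int L + 1)" shows "0 < m \<and> (m \<le> L \<or> L = m - 1)"
proof -
  have pos: "0 < int L + 1" by simp
  then have "int m \<le> int L + 1" using assms(1) zdvd_imp_le by blast
  moreover have "m \<noteq> 0"
  proof
    assume "m = 0" with assms(1) pos show False by simp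
  qed
  ultimately show ?thesis by auto
qed

lemma canc1: "y \<in> carrier G \<Longrightarrow> u \<in> carrier G \<Longrightarrow> y \<otimes> (inv y \<otimes> u) = u"
  by (simp add: m_assoc[symmetric])
lemma canc2: "y \<in> carrier G \<Longrightarrow> u \<in> carrier G \<Longrightarrow> y \<otimes> (u \<otimes> inv y) = u"
proof -
  assume a: "y \<in> carrier G" "u \<in> carrier G"
  then have "y \<otimes> (u \<otimes> inv y) = u \<otimes> (y \<otimes> inv y)" using m_lcomm by simp
  then show ?thesis using a by simp
qed

lemma H1: "x \<in> carrier G \<Longrightarrow> y \<in> carrier G \<Longrightarrow> z \<in> carrier G \<Longrightarrow> x \<otimes> inv z = (x \<otimes> inv (y \<otimes> z)) \<otimes> y"
  by (simp add: inv_mult m_ac canc1)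
lemma H2: "x \<in> carrier G \<Longrightarrow> y \<in> carrier G \<Longrightarrow> z \<in> carrier G \<Longrightarrow> x \<otimes> z = (x \<otimes> (y \<otimes> z)) \<otimes> inv y"
  by (simp add: m_ac canc2)

lemma sgl_pos: "snd x \<Longrightarrow> sgl x = fst x" by (simp add: sgl_def)
lemma sgl_neg: "\<not> snd x \<Longrightarrow> sgl x = inv (fst x)" by (simp add: sgl_def)

lemma K1pos: "wdd w \<Longrightarrow> allpos w \<Longrightarrow> int m dvd int (length w) - 1 \<Longrightarrow> a \<in> A \<Longrightarrow>
   f a \<le> p (a \<otimes> inv (el w)) + wt w"
proof (induction "length w" arbitrary: w rule: less_induct)
  case less
  have aG: "a \<in> carrier G" using less.prems(4) A_sub by auto
  show ?case
  proof (cases "length w = 1")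
    case True
    then obtain x where w: "w = [x]" by (metis One_nat_def length_0_conv length_Suc_conv)
    have "snd x" "fst x \<in> A" using less.prems(1,2) w by (auto simp: allpos_def)
    then show ?thesis using w kat1[OF less.prems(4), of "fst x"] A_sub by (auto simp: sgl_pos)
  next
    case False
    have m0: "0 < m" "m \<le> length w" using arith1[OF less.prems(3) False] by auto
    note S = split_block[OF less.prems(1,2) m0(2)]
    have "int m dvd int (length (drop m w)) - 1" using S(7) less.prems(3) m0
    proof -
      have "int (length (drop m w)) - 1 = (int (length w) - 1) - int m" using S(7) m0 by simp
      moreover have "int m dvd (int (length w) - 1) - int m" using less.prems(3) by (rule dvd_diff) simp
      ultimately show ?thesis by (simp add: algebra_simps)
    qed
    then have IH: "f a \<le> p (a \<otimes> inv (el (drop m w))) + wt (drop m w)"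
      using less.hyps[of "drop m w"] S m0 less.prems(4) by simp
    have B: "p (el (take m w)) \<le> wt (take m w) \<or> M \<le> wt (take m w)"
      using BLK m0 S by blast
    have c: "el (take m w) \<in> carrier G" "el (drop m w) \<in> carrier G" using el_closed S(2,3) by auto
    have "p (a \<otimes> inv (el (drop m w))) \<le> p (a \<otimes> inv (el w)) + p (el (take m w))"
      using H1[OF aG c(1) c(2)] S(8) p_sub aG c by simp
    moreover have nn: "0 \<le> wt (take m w)" "0 \<le> wt (drop m w)" "0 \<le> p (a \<otimes> inv (el w))"
      using wt_nn S(2,3) p_nn aG c S(8) by auto
    moreover have "f a \<le> M" using f_le less.prems(4) by simp
    ultimately show ?thesis using IH B S(9) by linarith
  qed
qed

lemma K1neg: "wdd w \<Longrightarrow> allpos w \<Longrightarrow> int m dvd int (length w) + 1 \<Longrightarrow> a \<in> A \<Longrightarrow>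
   f a \<le> p (a \<otimes> el w) + wt w"
proof (induction "length w" arbitrary: w rule: less_induct)
  case less
  have aG: "a \<in> carrier G" using less.prems(4) A_sub by auto
  have ar: "0 < m" "m \<le> length w \<or> length w = m - 1" using arith2[OF less.prems(3)] by auto
  show ?case
  proof (cases "m \<le> length w")
    case False
    then show ?thesis using ar CO less.prems by auto
  next
    case True
    note m0 = ar(1) True
    note S = split_block[OF less.prems(1,2) m0(2)]
    have "int m dvd int (length (drop m w)) + 1"
    proof -
      have "int (length (drop m w)) + 1 = (int (length w) + 1) - int m" using S(7) m0 by simp
      moreover have "int m dvd (int (length w) + 1) - int m" using less.prems(3) by (rule dvd_diff) simp
      ultimately show ?thesis by (simp add: algebra_simps)
    qed
    then have IH: "f a \<le> p (a \<otimes> el (drop m w)) + wt (drop m w)"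
      using less.hyps[of "drop m w"] S m0 less.prems(4) by simp
    have B: "p (el (take m w)) \<le> wt (take m w) \<or> M \<le> wt (take m w)"
      using BLK m0 S by blast
    have c: "el (take m w) \<in> carrier G" "el (drop m w) \<in> carrier G" using el_closed S(2,3) by auto
    have e: "a \<otimes> el (drop m w) = (a \<otimes> el w) \<otimes> inv (el (take m w))"
      using H2[OF aG c(1) c(2)] S(8) by simp
    have "p (a \<otimes> el (drop m w)) \<le> p (a \<otimes> el w) + p (inv (el (take m w)))"
      unfolding e using aG c S(8) by (intro p_sub) auto
    then have "p (a \<otimes> el (drop m w)) \<le> p (a \<otimes> el w) + p (el (take m w))"
      using p_inv c by simp
    moreover have nn: "0 \<le> wt (take m w)" "0 \<le> wt (drop m w)" "0 \<le> p (a \<otimes> el w)"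
      using wt_nn S(2,3) p_nn aG c S(8) by auto
    moreover have "f a \<le> M" using f_le less.prems(4) by simp
    ultimately show ?thesis using IH B S(9) by linarith
  qed
qed

lemma mixed_split:
  assumes wd: "wdd w" and x: "x \<in> set w" "snd x" and y: "y \<in> set w" "\<not> snd y"
  defines "w2 \<equiv> remove1 y (remove1 x w)"
  shows "wdd w2" "length w2 < length w" "sg w = sg w2" "wt w = f (fst x) + f (fst y) + wt w2"
    "el w = (fst x \<otimes> inv (fst y)) \<otimes> el w2" "fst x \<in> A" "fst y \<in> A"
proof -
  have xy: "x \<noteq> y" using x y by auto
  have y1: "y \<in> set (remove1 x w)" using y xy by (simp add: in_set_remove1)
  have wd1: "wdd (remove1 x w)" using wd by (rule wdd_remove1)
  show wd2: "wdd w2" unfolding w2_def using wd1 by (rule wdd_remove1)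
  show "length w2 < length w" unfolding w2_def using x y1
    by (simp add: length_remove1) (metis One_nat_def Suc_pred diff_Suc_less length_pos_if_in_set lessI less_trans)
  show "sg w = sg w2" unfolding w2_def using sg_remove1[OF x(1)] sg_remove1[OF y1] x y
    by (simp add: sgn1_def)
  show "wt w = f (fst x) + f (fst y) + wt w2" unfolding w2_def using wt_remove1[OF x(1)] wt_remove1[OF y1]
    by simp
  show xa: "fst x \<in> A" "fst y \<in> A" using wd x y unfolding wdd_def by auto
  have c: "fst x \<in> carrier G" "fst y \<in> carrier G" "el w2 \<in> carrier G" using xa A_sub el_closed wd2 by auto
  have "el w = fst x \<otimes> (inv (fst y) \<otimes> el w2)" unfolding w2_def
    using el_remove1[OF wd x(1)] el_remove1[OF wd1 y1] x y by (simp add: sgl_def)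
  then show "el w = (fst x \<otimes> inv (fst y)) \<otimes> el w2" using c by (simp add: m_assoc)
qed

lemma not_mixed: "\<not> ((\<exists>x\<in>set w. snd x) \<and> (\<exists>y\<in>set w. \<not> snd y)) \<Longrightarrow> allpos w \<or> (\<forall>x\<in>set w. \<not> snd x)"
  by (auto simp: allpos_def)

lemma K0: "wdd w \<Longrightarrow> int m dvd sg w \<Longrightarrow> p (el w) \<le> wt w \<or> M \<le> wt w"
proof (induction "length w" arbitrary: w rule: less_induct)
  case less
  show ?case
  proof (cases "(\<exists>x\<in>set w. snd x) \<and> (\<exists>y\<in>set w. \<not> snd y)")
    case True
    then obtain x y where x: "x \<in> set w" "snd x" and y: "y \<in> set w" "\<not> snd y" by blast
    note S = mixed_split[OF less.prems(1) x y]
    have IH: "p (el (remove1 y (remove1 x w))) \<le> wt (remove1 y (remove1 x w)) \<or> M \<le> wt (remove1 y (remove1 x w))"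
      using less.hyps S less.prems(2) by simp
    have c: "fst x \<in> carrier G" "fst y \<in> carrier G" "el (remove1 y (remove1 x w)) \<in> carrier G"
      using S(6,7) A_sub el_closed S(1) by auto
    have "p (el w) \<le> p (fst x \<otimes> inv (fst y)) + p (el (remove1 y (remove1 x w)))"
      using S(5) p_sub c by simp
    moreover have "p (fst x \<otimes> inv (fst y)) \<le> f (fst x) + f (fst y)" using kat2 S(6,7) by simp
    moreover have "0 \<le> f (fst x)" "0 \<le> f (fst y)" using f_nn S(6,7) by auto
    ultimately show ?thesis using IH S(4) by linarith
  next
    case False
    then have "allpos w \<or> (\<forall>x\<in>set w. \<not> snd x)" by (rule not_mixed)
    then show ?thesis
    proof
      assume "allpos w" then show ?thesis using K0pos less.prems allpos_sg by simp
    next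
      assume n: "\<forall>x\<in>set w. \<not> snd x"
      have ap: "allpos (negw w)" using n by (rule allpos_negw)
      note N = negw_props[OF less.prems(1)]
      have "sg (negw w) = int (length (negw w))" using ap by (rule allpos_sg)
      then have "int (length (negw w)) = - sg w" using N by simp
      moreover have "int m dvd - sg w" using less.prems(2) by simp
      ultimately have "int m dvd int (length (negw w))" by simp
      then have "p (el (negw w)) \<le> wt (negw w) \<or> M \<le> wt (negw w)" using K0pos N ap by blast
      then show ?thesis using N p_inv el_closed less.prems(1) by simp
    qed
  qed
qed

lemma K1: "wdd w \<Longrightarrow> int m dvd sg w - 1 \<Longrightarrow> a \<in> A \<Longrightarrow> f a \<le> p (a \<otimes> inv (el w)) + wt w"
proof (induction "length w" arbitrary: w rule: less_induct)
  case less
  have aG: "a \<in> carrier G" using less.prems(3) A_sub by auto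
  show ?case
  proof (cases "(\<exists>x\<in>set w. snd x) \<and> (\<exists>y\<in>set w. \<not> snd y)")
    case True
    then obtain x y where x: "x \<in> set w" "snd x" and y: "y \<in> set w" "\<not> snd y" by blast
    note S = mixed_split[OF less.prems(1) x y]
    define w2 where "w2 = remove1 y (remove1 x w)"
    have IH: "f a \<le> p (a \<otimes> inv (el w2)) + wt w2"
      using less.hyps S less.prems(2,3) unfolding w2_def by simp
    have c: "fst x \<in> carrier G" "fst y \<in> carrier G" "el w2 \<in> carrier G"
      using S(6,7) A_sub el_closed S(1) unfolding w2_def by auto
    have c2: "fst x \<otimes> inv (fst y) \<in> carrier G" using c by simp
    have "p (a \<otimes> inv (el w2)) \<le> p (a \<otimes> inv (el w)) + p (fst x \<otimes> inv (fst y))"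
      using H1[OF aG c2 c(3)] S(5) p_sub aG c c2 unfolding w2_def by simp
    moreover have "p (fst x \<otimes> inv (fst y)) \<le> f (fst x) + f (fst y)" using kat2 S(6,7) by simp
    ultimately show ?thesis using IH S(4) unfolding w2_def by linarith
  next
    case False
    then have "allpos w \<or> (\<forall>x\<in>set w. \<not> snd x)" by (rule not_mixed)
    then show ?thesis
    proof
      assume "allpos w" then show ?thesis using K1pos less.prems allpos_sg by simp
    next
      assume n: "\<forall>x\<in>set w. \<not> snd x"
      have ap: "allpos (negw w)" using n by (rule allpos_negw)
      note N = negw_props[OF less.prems(1)]
      have "sg (negw w) = int (length (negw w))" using ap by (rule allpos_sg)
      then have "int (length (negw w)) + 1 = - (sg w - 1)" using N by simp
      moreover have "int m dvd - (sg w - 1)" using less.prems(2) by (simp only: dvd_minus_iff)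
      ultimately have "int m dvd int (length (negw w)) + 1" by simp
      then have "f a \<le> p (a \<otimes> el (negw w)) + wt (negw w)" using K1neg N ap less.prems(3) by blast
      then show ?thesis using N by simp
    qed
  qed
qed

end



context wdk begin

definition Sset :: "'a \<Rightarrow> int \<Rightarrow> real set" where
  "Sset g k = {p (g \<otimes> inv (el w)) + wt w | w. wdd w \<and> int m dvd (sg w + k)}"
definition qw :: "'a \<times> int \<Rightarrow> real" where "qw x = min M (Inf (Sset (fst x) (snd x)))"

lemma sg_replicate: "sg (replicate n x) = int n * sgn1 x"
  by (induction n) (auto simp: algebra_simps)

lemma wdd_replicate: "fst x \<in> A \<Longrightarrow> wdd (replicate n x)"
  by (induction n) auto

lemma S_ne: assumes g: "g \<in> carrier G" shows "Sset g k \<noteq> {}"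
proof -
  obtain a0 where a0: "a0 \<in> A" using A_ne by blast
  define w0 where "w0 = replicate (nat \<bar>k\<bar>) (a0, k < 0)"
  have "sg w0 = - k" unfolding w0_def by (simp add: sg_replicate sgn1_def)
  moreover have "wdd w0" unfolding w0_def using a0 by (simp add: wdd_replicate)
  ultimately have "p (g \<otimes> inv (el w0)) + wt w0 \<in> Sset g k" unfolding Sset_def by force
  then show ?thesis by blast
qed

lemma S_nn: "g \<in> carrier G \<Longrightarrow> s \<in> Sset g k \<Longrightarrow> 0 \<le> s"
  unfolding Sset_def using p_nn wt_nn el_closed by (auto intro!: add_nonneg_nonneg)

lemma S_bdd: "g \<in> carrier G \<Longrightarrow> bdd_below (Sset g k)"
  using S_nn by (meson bdd_below.I)

lemma Inf_nn: "g \<in> carrier G \<Longrightarrow> 0 \<le> Inf (Sset g k)"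
  using S_nn S_ne by (meson cInf_greatest)

lemma qw_nn: "g \<in> carrier G \<Longrightarrow> 0 \<le> qw (g, k)"
  using Inf_nn M_nn by (simp add: qw_def)

lemma qw_le: "qw x \<le> M" by (simp add: qw_def)

lemma S_mod: "Sset g (k mod int m) = Sset g k"
proof -
  have "\<And>s. int m dvd (s + k mod int m) \<longleftrightarrow> int m dvd (s + k)"
    by (simp add: dvd_eq_mod_eq_0 mod_add_right_eq)
  then show ?thesis unfolding Sset_def by simp
qed

lemma S_neg: assumes g: "g \<in> carrier G" shows "Sset g k \<subseteq> Sset (inv g) (- k)"
proof
  fix s assume "s \<in> Sset g k"
  then obtain w where w: "wdd w" "int m dvd (sg w + k)" "s = p (g \<otimes> inv (el w)) + wt w"
    unfolding Sset_def by blast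
  note N = negw_props[OF w(1)]
  have ec: "el w \<in> carrier G" using el_closed w(1) by simp
  have "p (inv g \<otimes> inv (el (negw w))) = p (g \<otimes> inv (el w))"
  proof -
    have "inv g \<otimes> inv (el (negw w)) = inv (g \<otimes> inv (el w))" using N g ec by (simp add: inv_mult)
    then show ?thesis using p_inv g ec by simp
  qed
  moreover have "int m dvd (sg (negw w) + - k)"
  proof -
    have "sg (negw w) + - k = - (sg w + k)" using N by simp
    then show ?thesis using w(2) by (simp only: dvd_minus_iff)
  qed
  ultimately show "s \<in> Sset (inv g) (- k)" unfolding Sset_def using N w(3) by force
qed

lemma qw_inv: assumes g: "g \<in> carrier G" shows "qw (inv g, (- k) mod int m) = qw (g, k)"
proof -
  have "Sset (inv g) ((- k) mod int m) = Sset (inv g) (- k)" by (rule S_mod)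
  moreover have "Sset (inv g) (- k) \<subseteq> Sset g k" using S_neg[of "inv g" "- k"] g by simp
  ultimately have "Sset (inv g) ((- k) mod int m) = Sset g k" using S_neg[OF g] by auto
  then show ?thesis by (simp add: qw_def)
qed

lemma S_add: assumes g: "g \<in> carrier G" and h: "h \<in> carrier G"
  and s: "s \<in> Sset g k" and t: "t \<in> Sset h l"
  shows "Inf (Sset (g \<otimes> h) (k + l)) \<le> s + t"
proof -
  obtain w where w: "wdd w" "int m dvd (sg w + k)" "s = p (g \<otimes> inv (el w)) + wt w"
    using s unfolding Sset_def by blast
  obtain v where v: "wdd v" "int m dvd (sg v + l)" "t = p (h \<otimes> inv (el v)) + wt v"
    using t unfolding Sset_def by blast
  have c: "el w \<in> carrier G" "el v \<in> carrier G" using el_closed w(1) v(1) by auto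
  have e: "(g \<otimes> h) \<otimes> inv (el (w @ v)) = (g \<otimes> inv (el w)) \<otimes> (h \<otimes> inv (el v))"
    using c g h w(1) v(1) by (simp add: el_append inv_mult m_ac)
  have "p ((g \<otimes> h) \<otimes> inv (el (w @ v))) \<le> p (g \<otimes> inv (el w)) + p (h \<otimes> inv (el v))"
    unfolding e using c g h by (intro p_sub) auto
  moreover have "int m dvd (sg (w @ v) + (k + l))"
  proof -
    have "sg (w @ v) + (k + l) = (sg w + k) + (sg v + l)" by (simp add: sg_append)
    then show ?thesis using w(2) v(2) by (simp only: dvd_add)
  qed
  moreover have "wdd (w @ v)" using w v by (simp add: wdd_append)
  ultimately have "p ((g \<otimes> h) \<otimes> inv (el (w @ v))) + wt (w @ v) \<in> Sset (g \<otimes> h) (k + l)"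
    "p ((g \<otimes> h) \<otimes> inv (el (w @ v))) + wt (w @ v) \<le> s + t"
    unfolding Sset_def using w(3) v(3) by (blast, simp add: wt_append)
  moreover have "bdd_below (Sset (g \<otimes> h) (k + l))" using S_bdd g h by simp
  ultimately show ?thesis using cInf_lower order_trans by blast
qed

lemma qw_sub: assumes g: "g \<in> carrier G" and h: "h \<in> carrier G"
  shows "qw (g \<otimes> h, (k + l) mod int m) \<le> qw (g, k) + qw (h, l)"
proof -
  have "\<forall>s\<in>Sset g k. \<forall>t\<in>Sset h l. Inf (Sset (g \<otimes> h) (k + l)) \<le> s + t"
    using S_add g h by blast
  then have "\<forall>t\<in>Sset h l. Inf (Sset (g \<otimes> h) (k + l)) - t \<le> Inf (Sset g k)"
    using S_ne[OF g] by (meson cInf_greatest diff_le_eq)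
  then have "\<forall>t\<in>Sset h l. Inf (Sset (g \<otimes> h) (k + l)) - Inf (Sset g k) \<le> t" by force
  then have I: "Inf (Sset (g \<otimes> h) (k + l)) \<le> Inf (Sset g k) + Inf (Sset h l)"
    using S_ne[OF h] by (smt (verit) cInf_greatest)
  have "Sset (g \<otimes> h) ((k + l) mod int m) = Sset (g \<otimes> h) (k + l)" by (rule S_mod)
  then show ?thesis using I Inf_nn[OF g, of k] Inf_nn[OF h, of l] M_nn unfolding qw_def by auto
qed

lemma qw_G: assumes g: "g \<in> carrier G" shows "qw (g, 0) = p g"
proof -
  have "p (g \<otimes> inv (el [])) + wt [] \<in> Sset g 0" unfolding Sset_def
    by (intro CollectI exI[of _ "[]"]) simp
  then have "p g \<in> Sset g 0" using g by simp
  then have "Inf (Sset g 0) \<le> p g" using S_bdd[OF g] by (simp add: cInf_lower)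
  moreover have "p g \<le> Inf (Sset g 0)"
  proof (rule cInf_greatest[OF S_ne[OF g]])
    fix s assume "s \<in> Sset g 0"
    then obtain w where w: "wdd w" "int m dvd sg w" "s = p (g \<otimes> inv (el w)) + wt w"
      unfolding Sset_def by auto
    have c: "el w \<in> carrier G" using el_closed w(1) by simp
    have "p g \<le> p (g \<otimes> inv (el w)) + p (el w)"
      using p_sub[of "g \<otimes> inv (el w)" "el w"] c g by (simp add: m_assoc)
    moreover have "p (el w) \<le> wt w \<or> M \<le> wt w" using K0 w by simp
    moreover have "0 \<le> p (g \<otimes> inv (el w))" using p_nn c g by simp
    moreover have "p g \<le> M" using p_le g by simp
    ultimately show "p g \<le> s" using w(3) by linarith
  qed
  moreover have "p g \<le> M" using p_le g by simp
  ultimately show ?thesis unfolding qw_def by simp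
qed

lemma qw_f: assumes a: "a \<in> A" shows "qw (a, (- 1) mod int m) = f a"
proof -
  have aG: "a \<in> carrier G" using a A_sub by auto
  have S: "Sset a ((- 1) mod int m) = Sset a (- 1)" by (rule S_mod)
  have "p (a \<otimes> inv (el [(a, True)])) + wt [(a, True)] \<in> Sset a (- 1)"
    unfolding Sset_def using a by (intro CollectI exI[of _ "[(a, True)]"]) (simp add: sgn1_def)
  then have "Inf (Sset a (- 1)) \<le> f a" using S_bdd[OF aG] aG by (simp add: sgl_def p_one cInf_lower)
  moreover have "f a \<le> Inf (Sset a (- 1))"
  proof (rule cInf_greatest[OF S_ne[OF aG]])
    fix s assume "s \<in> Sset a (- 1)"
    then obtain w where w: "wdd w" "int m dvd (sg w - 1)" "s = p (a \<otimes> inv (el w)) + wt w"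
      unfolding Sset_def by auto
    then show "f a \<le> s" using K1 a by simp
  qed
  moreover have "f a \<le> M" using f_le a by simp
  ultimately show ?thesis unfolding qw_def using S by simp
qed

lemma qw_pseudo: "pseudo (PG G m) qw"
proof -
  interpret P: comm_group "PG G m" by (rule PG_comm_group[OF comm_group_axioms])
  show ?thesis
  proof (unfold_locales)
    fix x assume "x \<in> carrier (PG G m)"
    then obtain g k where x: "x = (g, k)" "g \<in> carrier G" "k \<in> carrier (integer_mod_group m)"
      by (auto simp: carrier_PG)
    show "0 \<le> qw x" using x qw_nn by simp
    show "qw (inv\<^bsub>PG G m\<^esub> x) = qw x" using x qw_inv by (simp add: inv_PG comm_group_axioms)
    fix y assume "y \<in> carrier (PG G m)"
    then obtain h l where y: "y = (h, l)" "h \<in> carrier G" "l \<in> carrier (integer_mod_group m)"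
      by (auto simp: carrier_PG)
    show "qw (x \<otimes>\<^bsub>PG G m\<^esub> y) \<le> qw x + qw y" using x y qw_sub by (simp add: mult_PG)
  next
    show "qw \<one>\<^bsub>PG G m\<^esub> = 0" by (simp add: one_PG qw_G p_one)
  qed
qed

end



context wd begin

lemma el_snoc: "wdd u \<Longrightarrow> fst x \<in> A \<Longrightarrow> el (u @ [x]) = el u \<otimes> sgl x"
  using el_append[of u "[x]"] sgl_closed by simp

lemma el_fp: "wdd u \<Longrightarrow> allpos u \<Longrightarrow> el u = finprod G (\<lambda>k. fst (u ! (k - 1))) {1..length u}"
proof (induction u rule: rev_induct)
  case Nil then show ?case by simp
next
  case (snoc x u)
  have wu: "wdd u" "fst x \<in> A" "allpos u" "snd x" using snoc.prems by (auto simp: wdd_def allpos_def)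
  have IH: "el u = finprod G (\<lambda>k. fst (u ! (k - 1))) {1..length u}" using snoc.IH wu by simp
  have cx: "fst x \<in> carrier G" using wu A_sub by auto
  have cu: "(\<lambda>k. fst (u ! (k - 1))) \<in> {1..length u} \<rightarrow> carrier G"
    using wu(1) A_sub unfolding wdd_def by (auto simp: Pi_def)
  have cu2: "(\<lambda>k. fst ((u @ [x]) ! (k - 1))) \<in> {1..length u} \<rightarrow> carrier G"
    using cu by (auto simp: Pi_def nth_append)
  have ins: "{1..length (u @ [x])} = insert (Suc (length u)) {1..length u}" by auto
  have "finprod G (\<lambda>k. fst ((u @ [x]) ! (k - 1))) {1..length (u @ [x])}
      = fst x \<otimes> finprod G (\<lambda>k. fst ((u @ [x]) ! (k - 1))) {1..length u}"
    unfolding ins using cu2 cx by (subst finprod_insert) auto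
  also have "finprod G (\<lambda>k. fst ((u @ [x]) ! (k - 1))) {1..length u} = finprod G (\<lambda>k. fst (u ! (k - 1))) {1..length u}"
    by (rule finprod_cong') (use cu in \<open>auto simp: nth_append\<close>)
  finally show ?case using IH el_snoc[OF wu(1,2)] wu cx cu
    by (simp add: sgl_def m_comm)
qed

lemma wt_sum: "wt u = (\<Sum>k=1..length u. f (fst (u ! (k - 1))))"
proof (induction u rule: rev_induct)
  case Nil then show ?case by simp
next
  case (snoc x u)
  have ins: "{1..length (u @ [x])} = insert (Suc (length u)) {1..length u}" by auto
  have "(\<Sum>k=1..length (u @ [x]). f (fst ((u @ [x]) ! (k - 1)))) = f (fst x) + (\<Sum>k=1..length u. f (fst ((u @ [x]) ! (k - 1))))"
    unfolding ins by simp
  also have "(\<Sum>k=1..length u. f (fst ((u @ [x]) ! (k - 1)))) = (\<Sum>k=1..length u. f (fst (u ! (k - 1))))"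
    by (rule sum.cong) (auto simp: nth_append)
  finally show ?case using snoc by (simp add: wt_append)
qed

lemma blk_cond:
  assumes N2: "2 < N" and cond: "\<forall>a. (\<forall>k\<in>{1..N}. a k \<in> A) \<longrightarrow>
               \<bar>p (finprod G a {1..N}) - f (a N)\<bar> \<le> (\<Sum>k=1..N-1. f (a k))"
  and u: "wdd u" "length u = N" "allpos u"
  shows "p (el u) \<le> wt u"
proof -
  define a where "a = (\<lambda>k. fst (u ! (k - 1)))"
  have aA: "\<forall>k\<in>{1..N}. a k \<in> A" using u unfolding a_def wdd_def
    by auto
  have ins: "{1..N} = insert N {1..N-1}" using N2 by auto
  have "wt u = (\<Sum>k=1..N. f (a k))" using wt_sum u unfolding a_def by simp
  also have "\<dots> = f (a N) + (\<Sum>k=1..N-1. f (a k))" unfolding ins by (subst sum.insert) auto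
  finally have "wt u = f (a N) + (\<Sum>k=1..N-1. f (a k))" .
  moreover have "p (el u) = p (finprod G a {1..N})" using el_fp u unfolding a_def by simp
  moreover have "\<bar>p (finprod G a {1..N}) - f (a N)\<bar> \<le> (\<Sum>k=1..N-1. f (a k))" using cond aA by blast
  then have "p (finprod G a {1..N}) - f (a N) \<le> (\<Sum>k=1..N-1. f (a k))" by (meson abs_ge_self order_trans)
  ultimately show ?thesis by linarith
qed

lemma co_cond:
  assumes N2: "2 < N" and cond: "\<forall>a. (\<forall>k\<in>{1..N}. a k \<in> A) \<longrightarrow>
               \<bar>p (finprod G a {1..N}) - f (a N)\<bar> \<le> (\<Sum>k=1..N-1. f (a k))"
  and u: "wdd u" "length u = N - 1" "allpos u" and b: "b \<in> A"
  shows "f b \<le> p (b \<otimes> el u) + wt u"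
proof -
  define a where "a = (\<lambda>k. if k = N then b else fst (u ! (k - 1)))"
  have uA: "fst (u ! (k - 1)) \<in> A" if k: "k \<in> {1..N-1}" for k
  proof -
    have "k - 1 < length u" using u(2) k by auto
    then have "u ! (k - 1) \<in> set u" by (rule nth_mem)
    then show ?thesis using u(1) unfolding wdd_def by blast
  qed
  have aA: "\<forall>k\<in>{1..N}. a k \<in> A"
  proof
    fix k assume k: "k \<in> {1..N}"
    show "a k \<in> A"
    proof (cases "k = N")
      case True then show ?thesis using b by (simp add: a_def)
    next
      case False then have "k \<in> {1..N-1}" using k by auto
      then show ?thesis using uA False by (simp add: a_def)
    qed
  qed
  have ins: "{1..N} = insert N {1..N-1}" using N2 by auto
  have cu: "(\<lambda>k. fst (u ! (k - 1))) \<in> {1..N-1} \<rightarrow> carrier G" using uA A_sub by auto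
  have ca: "a \<in> {1..N-1} \<rightarrow> carrier G"
  proof
    fix k assume k: "k \<in> {1..N-1}"
    then have "k \<noteq> N" using N2 by auto
    then show "a k \<in> carrier G" using uA[OF k] A_sub by (auto simp: a_def)
  qed
  have bG: "b \<in> carrier G" using b A_sub by auto
  have "finprod G a {1..N} = a N \<otimes> finprod G a {1..N-1}"
    unfolding ins using ca bG by (subst finprod_insert) (auto simp: a_def)
  also have "finprod G a {1..N-1} = finprod G (\<lambda>k. fst (u ! (k - 1))) {1..N-1}"
    by (rule finprod_cong') (use cu in \<open>auto simp: a_def\<close>)
  also have "\<dots> = el u" using el_fp u by simp
  finally have fp: "finprod G a {1..N} = b \<otimes> el u" by (simp add: a_def)
  have "(\<Sum>k=1..N-1. f (a k)) = (\<Sum>k=1..N-1. f (fst (u ! (k - 1))))"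
    by (rule sum.cong) (auto simp: a_def)
  also have "\<dots> = wt u" using wt_sum u by simp
  finally have "(\<Sum>k=1..N-1. f (a k)) = wt u" .
  moreover have "\<bar>p (finprod G a {1..N}) - f (a N)\<bar> \<le> (\<Sum>k=1..N-1. f (a k))" using cond aA by blast
  ultimately show ?thesis using fp by (simp add: a_def)
qed

lemma blk_two:
  assumes ex: "\<forall>x\<in>carrier G. x [^] (2::nat) = \<one>" and u: "wdd u" "length u = 2" "allpos u"
  shows "p (el u) \<le> wt u"
proof -
  obtain x y where xy: "u = [x, y]" using u(2)
    by (metis One_nat_def Suc_1 length_0_conv length_Suc_conv)
  have A: "fst x \<in> A" "fst y \<in> A" "snd x" "snd y" using u xy by (auto simp: wdd_def allpos_def)
  have c: "fst x \<in> carrier G" "fst y \<in> carrier G" using A A_sub by auto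
  have "fst y \<otimes> fst y = \<one>" using ex c by (simp add: numeral_2_eq_2)
  then have "inv (fst y) = fst y" using c by (simp add: inv_equality)
  then have "el u = fst x \<otimes> inv (fst y)" using xy A c by (simp add: sgl_def)
  then show ?thesis using kat2[OF A(1,2)] xy by simp
qed

lemma co_two:
  assumes ex: "\<forall>x\<in>carrier G. x [^] (2::nat) = \<one>" and u: "wdd u" "length u = 1" "allpos u" and b: "b \<in> A"
  shows "f b \<le> p (b \<otimes> el u) + wt u"
proof -
  obtain x where xy: "u = [x]" using u(2)
    by (metis One_nat_def length_0_conv length_Suc_conv)
  have A: "fst x \<in> A" "snd x" using u xy by (auto simp: wdd_def allpos_def)
  have c: "fst x \<in> carrier G" using A A_sub by auto
  have "fst x \<otimes> fst x = \<one>" using ex c by (simp add: numeral_2_eq_2)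
  then have "inv (fst x) = fst x" using c by (simp add: inv_equality)
  then have "el u = inv (fst x)" using xy A c by (simp add: sgl_def)
  then show ?thesis using kat1[OF b A(1)] xy by simp
qed

lemma wt_len: assumes d: "\<And>a. a \<in> A \<Longrightarrow> d \<le> f a" shows "wdd u \<Longrightarrow> real (length u) * d \<le> wt u"
proof (induction u)
  case Nil then show ?case by simp
next
  case (Cons x u)
  then have "d \<le> f (fst x)" "real (length u) * d \<le> wt u" using d by auto
  moreover have "real (length (x#u)) * d = d + real (length u) * d" by (simp add: algebra_simps)
  ultimately show ?case by simp
qed

end

context wdk begin

lemma wt_Q: assumes Q0: "0 \<in> Q" and Qadd: "\<forall>x\<in>Q \<inter> {0..}. \<forall>y\<in>Q \<inter> {0..}. x + y \<in> Q"
  and fQ: "f ` A \<subseteq> Q" shows "wdd w \<Longrightarrow> wt w \<in> Q \<inter> {0..}"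
proof (induction w)
  case Nil then show ?case using Q0 by simp
next
  case (Cons x w)
  then have "fst x \<in> A" "wdd w" by auto
  then have "f (fst x) \<in> Q \<inter> {0..}" using fQ f_nn by auto
  moreover have "wt w \<in> Q \<inter> {0..}" using Cons \<open>wdd w\<close> by simp
  ultimately show ?case using Qadd by simp
qed

lemma qw_Q:
  assumes fA: "finite A" and d: "0 < d" "\<And>a. a \<in> A \<Longrightarrow> d \<le> f a"
  and Q0: "0 \<in> Q" and Qadd: "\<forall>x\<in>Q \<inter> {0..}. \<forall>y\<in>Q \<inter> {0..}. x + y \<in> Q"
  and pQ: "p ` carrier G \<subseteq> Q" and fQ: "f ` A \<subseteq> Q" and MQ: "M \<in> Q"
  and g: "g \<in> carrier G"
  shows "qw (g, k) \<in> Q"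
proof (cases "M \<le> Inf (Sset g k)")
  case True then show ?thesis using MQ by (simp add: qw_def)
next
  case False
  define S where "S = Sset g k"
  define T where "T = {s \<in> S. s \<le> M}"
  define n where "n = nat \<lceil>M / d\<rceil>"
  have "\<exists>s\<in>S. s < M" using False S_ne[OF g] unfolding S_def by (meson cInf_lessD not_le)
  then have Tne: "T \<noteq> {}" unfolding T_def by force
  have "T \<subseteq> (\<lambda>w. p (g \<otimes> inv (el w)) + wt w) ` {w. set w \<subseteq> A \<times> UNIV \<and> length w \<le> n}"
  proof
    fix s assume "s \<in> T"
    then obtain w where w: "wdd w" "s = p (g \<otimes> inv (el w)) + wt w" "s \<le> M"
      unfolding T_def S_def Sset_def by auto
    have "0 \<le> p (g \<otimes> inv (el w))" using p_nn g el_closed w(1) by simp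
    then have "real (length w) * d \<le> M" using wt_len[OF d(2) w(1)] w by linarith
    then have "real (length w) \<le> M / d" using d(1) by (simp add: field_simps)
    then have "length w \<le> n" unfolding n_def by linarith
    moreover have "set w \<subseteq> A \<times> UNIV" using w(1) unfolding wdd_def by force
    ultimately show "s \<in> (\<lambda>w. p (g \<otimes> inv (el w)) + wt w) ` {w. set w \<subseteq> A \<times> UNIV \<and> length w \<le> n}"
      using w(2) by blast
  qed
  moreover have "finite {w. set w \<subseteq> A \<times> (UNIV :: bool set) \<and> length w \<le> n}"
    using fA by (intro finite_lists_length_le) simp
  ultimately have Tfin: "finite T" by (meson finite_surj)
  define t0 where "t0 = Min T"
  have t0T: "t0 \<in> T" unfolding t0_def using Tfin Tne by simp
  have t0le: "\<forall>s\<in>S. t0 \<le> s"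
  proof
    fix s assume s: "s \<in> S"
    show "t0 \<le> s"
    proof (cases "s \<le> M")
      case True then have "s \<in> T" using s unfolding T_def by simp
      then show ?thesis unfolding t0_def using Tfin by simp
    next
      case False then show ?thesis using t0T unfolding T_def by simp
    qed
  qed
  have "Inf S = t0" using t0T t0le unfolding T_def by (intro cInf_eq_minimum) auto
  then have q: "qw (g, k) = t0" using t0T unfolding qw_def S_def T_def by auto
  obtain w where w: "wdd w" "t0 = p (g \<otimes> inv (el w)) + wt w"
    using t0T unfolding T_def S_def Sset_def by auto
  have "p (g \<otimes> inv (el w)) \<in> Q \<inter> {0..}" using pQ p_nn g el_closed w(1) by auto
  moreover have "wt w \<in> Q \<inter> {0..}" using wt_Q[OF Q0 Qadd fQ w(1)] .
  ultimately show ?thesis using q w(2) Qadd by simp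
qed

end



lemma code_exists:
  fixes G :: "'a monoid" (structure) and p
  assumes cg: "comm_group G" and v: "is_value G p" and sep: "vseparable G p"
  shows "\<exists>code :: 'a \<times> int \<Rightarrow> real. inj_on code (carrier G \<times> UNIV)"
proof -
  interpret vg G p using cg v by (simp add: vg_def vg_axioms_def)
  obtain D where D: "countable D" "D \<subseteq> carrier G"
      "\<And>x e. x \<in> carrier G \<Longrightarrow> e > 0 \<Longrightarrow> \<exists>y\<in>D. p (x \<otimes> inv y) < e"
    using sep unfolding vseparable_def vdist_def by blast
  define \<iota> where "\<iota> x = {prod_encode (i, j) | i j. p (x \<otimes> inv (from_nat_into D i)) < 1 / real (Suc j)}" for x
  have inj1: "inj_on \<iota> (carrier G)"
  proof (rule inj_onI, rule ccontr)
    fix x y assume x: "x \<in> carrier G" and y: "y \<in> carrier G" and eq: "\<iota> x = \<iota> y" and ne: "x \<noteq> y"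
    define e where "e = p (x \<otimes> inv y)"
    have e: "0 < e" unfolding e_def using x y ne p_nn p_zero
      by (metis inv_closed inv_comm inv_equality less_eq_real_def m_closed r_inv)
    define j where "j = nat \<lceil>2 / e\<rceil>"
    have "2 / e \<le> real j" unfolding j_def by linarith
    then have "2 / e < real (Suc j)" by simp
    then have j: "2 / real (Suc j) < e" using e by (simp add: field_simps)
    obtain d where d: "d \<in> D" "p (x \<otimes> inv d) < 1 / real (Suc j)"
      using D(3)[OF x, of "1 / real (Suc j)"] by auto
    obtain i where i: "from_nat_into D i = d" using from_nat_into_surj[OF D(1) d(1)] by blast
    have "prod_encode (i, j) \<in> \<iota> x" unfolding \<iota>_def using d i by blast
    then have "prod_encode (i, j) \<in> \<iota> y" using eq by simp
    then obtain i' j' where "prod_encode (i, j) = prod_encode (i', j')"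
      "p (y \<otimes> inv (from_nat_into D i')) < 1 / real (Suc j')" unfolding \<iota>_def by blast
    then have dy: "p (y \<otimes> inv d) < 1 / real (Suc j)" using i by (simp add: prod_encode_eq)
    have dG: "d \<in> carrier G" using d D(2) by auto
    have "x \<otimes> inv y = (x \<otimes> inv d) \<otimes> (d \<otimes> inv y)" using x y dG by (metis inv_closed l_inv l_one m_assoc m_closed)
    then have "e \<le> p (x \<otimes> inv d) + p (d \<otimes> inv y)" unfolding e_def using x y dG p_sub by simp
    also have "p (d \<otimes> inv y) = p (y \<otimes> inv d)" using p_swap dG y by simp
    finally have "e < 2 / real (Suc j)" using d(2) dy by simp
    then show False using j by simp
  qed
  obtain \<rho> :: "nat set \<Rightarrow> real" where \<rho>: "bij_betw \<rho> UNIV UNIV"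
    using nat_sets_eqpoll_reals unfolding eqpoll_def by blast
  define code where "code x = real_of_int (snd x) + (arctan (\<rho> (\<iota> (fst x))) / pi + 1/2)" for x
  have fl: "\<lfloor>code x\<rfloor> = snd x" for x
  proof -
    have "0 < arctan (\<rho> (\<iota> (fst x))) / pi + 1/2" "arctan (\<rho> (\<iota> (fst x))) / pi + 1/2 < 1"
      using arctan_bounded[of "\<rho> (\<iota> (fst x))"] pi_gt_zero by (auto simp: field_simps)
    then show ?thesis unfolding code_def by (intro floor_unique) auto
  qed
  have "inj_on code (carrier G \<times> UNIV)"
  proof (rule inj_onI)
    fix x y assume x: "x \<in> carrier G \<times> UNIV" and y: "y \<in> carrier G \<times> UNIV" and eq: "code x = code y"
    have s: "snd x = snd y" using fl[of x] fl[of y] eq by simp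
    then have "arctan (\<rho> (\<iota> (fst x))) = arctan (\<rho> (\<iota> (fst y)))" using eq unfolding code_def
      using pi_gt_zero by (simp add: field_simps)
    then have "\<rho> (\<iota> (fst x)) = \<rho> (\<iota> (fst y))" by (simp add: arctan_eq_iff)
    then have "\<iota> (fst x) = \<iota> (fst y)" using \<rho> by (simp add: bij_betw_def inj_eq)
    then have "fst x = fst y" using inj1 x y by (auto dest: inj_onD)
    then show "x = y" using s by (simp add: prod_eq_iff)
  qed
  then show ?thesis by blast
qed




lemma build:
  fixes G :: "'a monoid" (structure) and code :: "'a \<times> int \<Rightarrow> real"
  assumes vgG: "vg G p" and ps: "pseudo (PG G m) q" and qG: "\<And>g. g \<in> carrier G \<Longrightarrow> q (g, 0) = p g"
    and qle: "\<And>x. x \<in> carrier (PG G m) \<Longrightarrow> q x \<le> M"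
    and code: "inj_on code (carrier G \<times> (UNIV :: int set))" and sep: "vseparable G p" and Mr: "ereal M \<le> r"
    and expo: "N \<noteq> 0 \<Longrightarrow> (\<forall>x\<in>carrier G. x [^] N = \<one>) \<and> m dvd N"
    and y0: "y0 \<in> carrier (PG G m)" and fy: "\<And>a. a \<in> A \<Longrightarrow> f a = q ((a, 0) \<otimes>\<^bsub>PG G m\<^esub> inv\<^bsub>PG G m\<^esub> y0)"
    and A: "A \<subseteq> carrier G"
  shows "\<exists>(H :: ('a + real) monoid) qq. in_class_G r N H qq \<and> bounded_value H qq \<and> enlarges H qq G p \<and>
    (\<exists>b\<in>carrier H. \<forall>a\<in>A. f a = qq (Inl a \<otimes>\<^bsub>H\<^esub> inv\<^bsub>H\<^esub> b)) \<and>
    (finite (carrier G) \<longrightarrow> 0 < m \<longrightarrow> finite (carrier H)) \<and>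
    (\<forall>u\<in>carrier H. \<exists>x\<in>carrier (PG G m). qq u = q x)"
proof -
  have code': "inj_on code (carrier (PG G m))"
    using code by (rule inj_on_subset) (auto simp: carrier_PG)
  interpret E: ext G p m q code M
    by (intro ext.intro ext_axioms.intro vgG ps qG qle code')
  have main: "in_class_G r N E.Q.HQ E.Q.qQ \<and> bounded_value E.Q.HQ E.Q.qQ \<and> enlarges E.Q.HQ E.Q.qQ G p"
    by (rule E.ext_main[OF sep Mr expo])
  have b: "E.enc y0 \<in> carrier E.Q.HQ" using y0 by (simp add: E.Q.carrier_HQ)
  have tr: "\<forall>a\<in>A. f a = E.Q.qQ (Inl a \<otimes>\<^bsub>E.Q.HQ\<^esub> inv\<^bsub>E.Q.HQ\<^esub> E.enc y0)"
  proof
    fix a assume a: "a \<in> A"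
    then have "a \<in> carrier G" using A by auto
    then show "f a = E.Q.qQ (Inl a \<otimes>\<^bsub>E.Q.HQ\<^esub> inv\<^bsub>E.Q.HQ\<^esub> E.enc y0)"
      using E.triv_formula[of a y0] y0 fy[OF a] by simp
  qed
  have fin: "finite (carrier G) \<longrightarrow> 0 < m \<longrightarrow> finite (carrier E.Q.HQ)" using E.finite_HQ by blast
  have vals: "\<forall>u\<in>carrier E.Q.HQ. \<exists>x\<in>carrier (PG G m). E.Q.qQ u = q x"
    using E.values_HQ by blast
  show ?thesis using main b tr fin vals by blast
qed

lemma copy_pseudo:
  fixes G :: "'a monoid" (structure)
  assumes vgG: "vg G p"
  shows "pseudo (PG G 1) (\<lambda>x. p (fst x))"
proof -
  interpret vg G p by (rule vgG)
  interpret P: comm_group "PG G 1" by (rule PG_comm_group[OF comm_group_axioms])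
  show ?thesis
  proof unfold_locales
    fix x assume "x \<in> carrier (PG G 1)"
    then obtain g k where x: "x = (g, k)" "g \<in> carrier G" "k \<in> carrier (integer_mod_group 1)"
      by (auto simp: carrier_PG)
    show "0 \<le> p (fst x)" using x p_nn by simp
    show "p (fst (inv\<^bsub>PG G 1\<^esub> x)) = p (fst x)" using x p_inv by (simp add: inv_PG comm_group_axioms)
    fix y assume "y \<in> carrier (PG G 1)"
    then obtain h l where y: "y = (h, l)" "h \<in> carrier G" "l \<in> carrier (integer_mod_group 1)"
      by (auto simp: carrier_PG)
    show "p (fst (x \<otimes>\<^bsub>PG G 1\<^esub> y)) \<le> p (fst x) + p (fst y)" using x y p_sub by (simp add: mult_PG)
  next
    show "p (fst \<one>\<^bsub>PG G 1\<^esub>) = 0" by (simp add: one_PG p_one)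
  qed
qed


lemma word_build:
  fixes G :: "'a monoid" (structure) and code :: "'a \<times> int \<Rightarrow> real"
  assumes W: "wdk G p A f m M"
    and code: "inj_on code (carrier G \<times> (UNIV :: int set))" and sep: "vseparable G p" and Mr: "ereal M \<le> r"
    and expo: "N \<noteq> 0 \<longrightarrow> (\<forall>x\<in>carrier G. x [^] N = \<one>) \<and> m dvd N"
  shows "\<exists>(H :: ('a + real) monoid) qq. in_class_G r N H qq \<and> bounded_value H qq \<and> enlarges H qq G p \<and>
    (\<exists>b\<in>carrier H. \<forall>a\<in>A. f a = qq (Inl a \<otimes>\<^bsub>H\<^esub> inv\<^bsub>H\<^esub> b)) \<and>
    (finite (carrier G) \<longrightarrow> 0 < m \<longrightarrow> finite (carrier H)) \<and>
    (\<forall>Q d. finite A \<and> 0 < d \<and> (\<forall>a\<in>A. d \<le> f a) \<and> 0 \<in> Q \<and> (\<forall>x\<in>Q \<inter> {0..}. \<forall>y\<in>Q \<inter> {0..}. x + y \<in> Q)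
        \<and> p ` carrier G \<subseteq> Q \<and> f ` A \<subseteq> Q \<and> M \<in> Q \<longrightarrow> qq ` carrier H \<subseteq> Q)"
proof -
  interpret W: wdk G p A f m M by (rule W)
  define y0 where "y0 = (\<one>, 1 mod int m)"
  have y0: "y0 \<in> carrier (PG G m)" unfolding y0_def by (simp add: carrier_PG mod_carrier)
  have fy: "f a = W.qw ((a, 0) \<otimes>\<^bsub>PG G m\<^esub> inv\<^bsub>PG G m\<^esub> y0)" if a: "a \<in> A" for a
  proof -
    have aG: "a \<in> carrier G" using a W.A_sub by auto
    have i: "inv\<^bsub>PG G m\<^esub> y0 = (inv \<one>, (- (1 mod int m)) mod int m)"
      unfolding y0_def by (rule inv_PG[OF W.comm_group_axioms]) (simp_all add: mod_carrier)
    have e: "(0 + (- (1 mod int m)) mod int m) mod int m = (- 1) mod int m"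
    proof -
      have "(- (1 mod int m)) mod int m = (- 1) mod int m" by (rule mod_minus_eq)
      then show ?thesis by (simp only: add.left_neutral mod_mod_trivial)
    qed
    have "(a, 0) \<otimes>\<^bsub>PG G m\<^esub> inv\<^bsub>PG G m\<^esub> y0 = (a \<otimes> inv \<one>, (0 + (- (1 mod int m)) mod int m) mod int m)"
      unfolding i by (rule mult_PG)
    also have "\<dots> = (a, (- 1) mod int m)" using aG e by simp
    finally have "(a, 0) \<otimes>\<^bsub>PG G m\<^esub> inv\<^bsub>PG G m\<^esub> y0 = (a, (- 1) mod int m)" .
    then show ?thesis using W.qw_f[OF a] by simp
  qed
  obtain H :: "('a + real) monoid" and qq where Ha: "in_class_G r N H qq" and Hb: "bounded_value H qq"
    and Hc: "enlarges H qq G p" and Hd: "\<exists>b\<in>carrier H. \<forall>a\<in>A. f a = qq (Inl a \<otimes>\<^bsub>H\<^esub> inv\<^bsub>H\<^esub> b)"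
    and He: "finite (carrier G) \<longrightarrow> 0 < m \<longrightarrow> finite (carrier H)"
    and Hf: "\<forall>u\<in>carrier H. \<exists>x\<in>carrier (PG G m). qq u = W.qw x"
    using build[OF W.vg_axioms W.qw_pseudo W.qw_G W.qw_le code sep Mr expo[rule_format] y0 fy W.A_sub] by blast
  have QV: "\<forall>Q d. finite A \<and> 0 < d \<and> (\<forall>a\<in>A. d \<le> f a) \<and> 0 \<in> Q \<and> (\<forall>x\<in>Q \<inter> {0..}. \<forall>y\<in>Q \<inter> {0..}. x + y \<in> Q)
        \<and> p ` carrier G \<subseteq> Q \<and> f ` A \<subseteq> Q \<and> M \<in> Q \<longrightarrow> qq ` carrier H \<subseteq> Q"
  proof (intro allI impI subsetI)
    fix Q d v assume hyp: "finite A \<and> 0 < d \<and> (\<forall>a\<in>A. d \<le> f a) \<and> 0 \<in> Q \<and> (\<forall>x\<in>Q \<inter> {0..}. \<forall>y\<in>Q \<inter> {0..}. x + y \<in> Q)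
        \<and> p ` carrier G \<subseteq> Q \<and> f ` A \<subseteq> Q \<and> M \<in> Q" and "v \<in> qq ` carrier H"
    then obtain u where u: "u \<in> carrier H" "v = qq u" by blast
    then obtain x where x: "x \<in> carrier (PG G m)" "qq u = W.qw x" using Hf by blast
    obtain g k where "x = (g, k)" "g \<in> carrier G" using x(1) by (auto simp: carrier_PG)
    then show "v \<in> Q" using W.qw_Q[of d Q g k] hyp u x by auto
  qed
  show ?thesis
    by (rule exI[of _ H], rule exI[of _ qq], intro conjI, fact Ha, fact Hb, fact Hc, fact Hd, fact He, fact QV)
qed

lemma main_helper:
  fixes r :: ereal and N :: nat and G :: "'a monoid" (structure) and p :: "'a \<Rightarrow> real"
    and A :: "'a set" and f :: "'a \<Rightarrow> real"
  assumes r: "r = 1 \<or> r = \<infinity>"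
    and N: "N \<noteq> 1"
    and G: "in_class_G r N G p" and Gb: "bounded_value G p"
    and A: "A \<subseteq> carrier G" "A \<noteq> {}"
    and f: "E_r r G p A f"
    and cond: "N > 2 \<Longrightarrow> (\<forall>a. (\<forall>k\<in>{1..N}. a k \<in> A) \<longrightarrow>
               \<bar>p (finprod G a {1..N}) - f (a N)\<bar> \<le> (\<Sum>k=1..N-1. f (a k)))"
  shows "(\<exists>(H :: ('a + real) monoid) q. in_class_G r N H q \<and> bounded_value H q \<and>
             enlarges H q G p \<and>
             (\<exists>b\<in>carrier H. \<forall>a\<in>A. f a = q (Inl a \<otimes>\<^bsub>H\<^esub> inv\<^bsub>H\<^esub> b)))
       \<and> (\<forall>Q :: real set.
            {0..} \<subseteq> closure (Q \<inter> {0..}) \<and> 0 \<in> Q \<and>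
            (\<forall>x\<in>Q \<inter> {0..}. \<forall>y\<in>Q \<inter> {0..}. x + y \<in> Q) \<and>
            finite (carrier G) \<and> p ` carrier G \<union> f ` A \<subseteq> Q
            \<longrightarrow> (\<exists>(H :: ('a + real) monoid) q. in_class_G r N H q \<and> bounded_value H q \<and>
                   enlarges H q G p \<and>
                   (\<exists>b\<in>carrier H. \<forall>a\<in>A. f a = q (Inl a \<otimes>\<^bsub>H\<^esub> inv\<^bsub>H\<^esub> b)) \<and>
                   finite (carrier H) \<and> q ` carrier H \<subseteq> Q))"
proof -
  have cg: "comm_group G" and v: "is_value G p" and sep: "vseparable G p"
    and pr: "\<forall>x\<in>carrier G. ereal (p x) \<le> r" and ex: "N \<noteq> 0 \<longrightarrow> (\<forall>x\<in>carrier G. x [^] N = \<one>)"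
    using G unfolding in_class_G_def by auto
  have vgG: "vg G p" using cg v by (simp add: vg_def vg_axioms_def)
  interpret vg G p by (rule vgG)
  have f_nn: "\<And>a. a \<in> A \<Longrightarrow> 0 \<le> f a" using f unfolding E_r_def katetov_on_def by auto
  have kk: "\<And>a b. a \<in> A \<Longrightarrow> b \<in> A \<Longrightarrow> \<bar>f a - f b\<bar> \<le> p (a \<otimes> inv b) \<and> p (a \<otimes> inv b) \<le> f a + f b"
    using f unfolding E_r_def katetov_on_def vdist_def by auto
  have kat1: "\<And>a b. a \<in> A \<Longrightarrow> b \<in> A \<Longrightarrow> f a \<le> p (a \<otimes> inv b) + f b"
    using kk by (meson abs_le_D1 diff_le_eq)
  have kat2: "\<And>a b. a \<in> A \<Longrightarrow> b \<in> A \<Longrightarrow> p (a \<otimes> inv b) \<le> f a + f b" using kk by blast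
  have fr: "\<And>a. a \<in> A \<Longrightarrow> ereal (f a) \<le> r" using f unfolding E_r_def by auto
  obtain code :: "'a \<times> int \<Rightarrow> real" where code: "inj_on code (carrier G \<times> UNIV)"
    using code_exists[OF cg v sep] by blast
  obtain B where B: "\<forall>x\<in>carrier G. p x \<le> B" using Gb unfolding bounded_value_def by blast
  obtain a0 where a0: "a0 \<in> A" using A by blast
  have a0G: "a0 \<in> carrier G" using a0 A by auto
  define X where "X = p ` carrier G \<union> f ` A"
  define M1 where "M1 = Sup X"
  have Xne: "X \<noteq> {}" using a0 by (auto simp: X_def)
  have Xbdd: "bdd_above X"
  proof (rule bdd_aboveI)
    fix x assume "x \<in> X"
    then show "x \<le> B + f a0"
    proof (auto simp: X_def)
      fix g assume "g \<in> carrier G" then show "p g \<le> B + f a0" using B f_nn[OF a0] by fastforce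
    next
      fix a assume a: "a \<in> A"
      then have "a \<otimes> inv a0 \<in> carrier G" using A a0G by auto
      then show "f a \<le> B + f a0" using kat1[OF a a0] B by fastforce
    qed
  qed
  have pM: "\<And>x. x \<in> carrier G \<Longrightarrow> p x \<le> M1" unfolding M1_def using Xbdd by (auto simp: X_def intro!: cSup_upper)
  have fM: "\<And>a. a \<in> A \<Longrightarrow> f a \<le> M1" unfolding M1_def using Xbdd by (auto simp: X_def intro!: cSup_upper)
  have M0: "0 \<le> M1" using pM[of \<one>] p_one by simp
  have Mr: "ereal M1 \<le> r"
    using r
  proof
    assume r1: "r = 1"
    have "\<forall>x\<in>X. x \<le> 1" using pr fr r1 by (auto simp: X_def one_ereal_def)
    then have "M1 \<le> 1" unfolding M1_def using Xne by (intro cSup_least) auto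
    then show ?thesis using r1 by (simp add: one_ereal_def)
  qed simp
  have wdN: "wd G p A f N M1"
    by (intro wd.intro wd_axioms.intro vgG A f_nn kat1 kat2 fM pM M0 N) auto
  interpret WN: wd G p A f N M1 by (rule wdN)
  have wdkN: "wdk G p A f N M1"
  proof (intro wdk.intro wdk_axioms.intro wdN)
    fix u assume N0: "0 < N" and u: "WN.wdd u" "length u = N" "WN.allpos u"
    show "p (WN.el u) \<le> WN.wt u \<or> M1 \<le> WN.wt u"
    proof (cases "N = 2")
      case True
      then have "\<forall>x\<in>carrier G. x [^] (2::nat) = \<one>" using ex by simp
      then show ?thesis using WN.blk_two u True by blast
    next
      case False
      then have "2 < N" using N N0 by linarith
      then show ?thesis using WN.blk_cond[OF _ cond] u by blast
    qed
  next
    fix u a assume N0: "0 < N" and u: "WN.wdd u" "length u = N - 1" "WN.allpos u" and a: "a \<in> A"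
    show "f a \<le> p (a \<otimes> WN.el u) + WN.wt u"
    proof (cases "N = 2")
      case True
      then have "\<forall>x\<in>carrier G. x [^] (2::nat) = \<one>" using ex by simp
      then show ?thesis using WN.co_two u True a by simp
    next
      case False
      then have "2 < N" using N N0 by linarith
      then show ?thesis using WN.co_cond[OF _ cond] u a by blast
    qed
  qed
  have expoN: "N \<noteq> 0 \<longrightarrow> (\<forall>x\<in>carrier G. x [^] N = \<one>) \<and> N dvd N" using ex by simp
  note BN = word_build[OF wdkN code sep Mr expoN]
  obtain HN :: "('a + real) monoid" and qN where N1: "in_class_G r N HN qN" and N2: "bounded_value HN qN"
    and N3: "enlarges HN qN G p" and N4: "\<exists>b\<in>carrier HN. \<forall>a\<in>A. f a = qN (Inl a \<otimes>\<^bsub>HN\<^esub> inv\<^bsub>HN\<^esub> b)"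
    and N5: "finite (carrier G) \<longrightarrow> 0 < N \<longrightarrow> finite (carrier HN)"
    and N6: "\<forall>Q d. finite A \<and> 0 < d \<and> (\<forall>a\<in>A. d \<le> f a) \<and> 0 \<in> Q \<and> (\<forall>x\<in>Q \<inter> {0..}. \<forall>y\<in>Q \<inter> {0..}. x + y \<in> Q)
        \<and> p ` carrier G \<subseteq> Q \<and> f ` A \<subseteq> Q \<and> M1 \<in> Q \<longrightarrow> qN ` carrier HN \<subseteq> Q"
    apply (insert BN) apply (elim exE conjE) apply (rule that) apply assumption+ done
  have part1: "\<exists>(H :: ('a + real) monoid) q. in_class_G r N H q \<and> bounded_value H q \<and>
             enlarges H q G p \<and> (\<exists>b\<in>carrier H. \<forall>a\<in>A. f a = q (Inl a \<otimes>\<^bsub>H\<^esub> inv\<^bsub>H\<^esub> b))"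
    by (rule exI[of _ HN], rule exI[of _ qN], intro conjI, fact N1, fact N2, fact N3, fact N4)
  have part2: "\<exists>(H :: ('a + real) monoid) q. in_class_G r N H q \<and> bounded_value H q \<and>
                   enlarges H q G p \<and>
                   (\<exists>b\<in>carrier H. \<forall>a\<in>A. f a = q (Inl a \<otimes>\<^bsub>H\<^esub> inv\<^bsub>H\<^esub> b)) \<and>
                   finite (carrier H) \<and> q ` carrier H \<subseteq> Q"
    if Qa: "{0..} \<subseteq> closure (Q \<inter> {0..}) \<and> 0 \<in> Q \<and>
            (\<forall>x\<in>Q \<inter> {0..}. \<forall>y\<in>Q \<inter> {0..}. x + y \<in> Q) \<and>
            finite (carrier G) \<and> p ` carrier G \<union> f ` A \<subseteq> Q" for Q :: "real set"
  proof -
    have fG: "finite (carrier G)" and Q0: "0 \<in> Q" and Qadd: "\<forall>x\<in>Q \<inter> {0..}. \<forall>y\<in>Q \<inter> {0..}. x + y \<in> Q"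
      and pQ: "p ` carrier G \<subseteq> Q" and fQ: "f ` A \<subseteq> Q" using Qa by auto
    have fA: "finite A" using fG A(1) by (rule finite_subset[rotated])
    have Xfin: "finite X" unfolding X_def using fA fG by simp
    have "M1 \<in> X" unfolding M1_def using Xfin Xne by (simp add: cSup_eq_Max)
    then have MQ: "M1 \<in> Q" using pQ fQ unfolding X_def by auto
    show ?thesis
    proof (cases "\<exists>a1\<in>A. f a1 = 0")
      case True
      then obtain a1 where a1: "a1 \<in> A" "f a1 = 0" by blast
      have a1G: "a1 \<in> carrier G" using a1 A by auto
      define y1 where "y1 = (a1, 0::int)"
      have y1: "y1 \<in> carrier (PG G 1)" unfolding y1_def using a1G by (simp add: carrier_PG)
      have fy: "f a = (\<lambda>x. p (fst x)) ((a, 0) \<otimes>\<^bsub>PG G 1\<^esub> inv\<^bsub>PG G 1\<^esub> y1)" if a: "a \<in> A" for a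
      proof -
        have "fst ((a, 0) \<otimes>\<^bsub>PG G 1\<^esub> inv\<^bsub>PG G 1\<^esub> y1) = a \<otimes> inv a1"
          unfolding y1_def using a1G by (simp add: inv_PG comm_group_axioms mult_PG)
        moreover have "f a = p (a \<otimes> inv a1)" using kat1[OF a a1(1)] kat2[OF a a1(1)] a1(2) by simp
        ultimately show ?thesis by simp
      qed
      have qle: "\<And>x. x \<in> carrier (PG G 1) \<Longrightarrow> p (fst x) \<le> M1" using pM by (auto simp: carrier_PG)
      have expo1: "N \<noteq> 0 \<longrightarrow> (\<forall>x\<in>carrier G. x [^] N = \<one>) \<and> 1 dvd N" using ex by simp
      have qG1: "\<And>g. g \<in> carrier G \<Longrightarrow> p (fst (g, 0::int)) = p g" by simp
      obtain H :: "('a + real) monoid" and qq where H1: "in_class_G r N H qq" and H2: "bounded_value H qq"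
        and H3: "enlarges H qq G p" and H4: "\<exists>b\<in>carrier H. \<forall>a\<in>A. f a = qq (Inl a \<otimes>\<^bsub>H\<^esub> inv\<^bsub>H\<^esub> b)"
        and H5: "finite (carrier G) \<longrightarrow> 0 < (1::nat) \<longrightarrow> finite (carrier H)"
        and H6: "\<forall>u\<in>carrier H. \<exists>x\<in>carrier (PG G 1). qq u = p (fst x)"
      proof -
        have Rb: "\<exists>(H :: ('a + real) monoid) qq. in_class_G r N H qq \<and> bounded_value H qq \<and> enlarges H qq G p \<and>
          (\<exists>b\<in>carrier H. \<forall>a\<in>A. f a = qq (Inl a \<otimes>\<^bsub>H\<^esub> inv\<^bsub>H\<^esub> b)) \<and>
          (finite (carrier G) \<longrightarrow> 0 < (1::nat) \<longrightarrow> finite (carrier H)) \<and>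
          (\<forall>u\<in>carrier H. \<exists>x\<in>carrier (PG G 1). qq u = p (fst x))"
          apply (rule build[where q="\<lambda>x. p (fst x)" and m=1])
          apply (rule vgG)
          apply (rule copy_pseudo[OF vgG])
          apply (rule qG1, assumption)
          apply (rule qle, assumption)
          apply (rule code)
          apply (rule sep)
          apply (rule Mr)
          apply (rule expo1[rule_format], assumption)
          apply (rule y1)
          apply (rule fy, assumption)
          apply (rule A(1))
          done
        show ?thesis
          apply (insert Rb) apply (elim exE conjE) apply (rule that) apply assumption+ done
      qed
      have H7: "qq ` carrier H \<subseteq> Q"
      proof
        fix v assume "v \<in> qq ` carrier H"
        then obtain u where u: "u \<in> carrier H" "v = qq u" by blast
        then obtain x where "x \<in> carrier (PG G 1)" "qq u = p (fst x)" using H6 by blast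
        then show "v \<in> Q" using pQ u by (auto simp: carrier_PG)
      qed
      have H8: "finite (carrier H)" using H5 fG by simp
      show ?thesis
        by (rule exI[of _ H], rule exI[of _ qq], intro conjI, fact H1, fact H2, fact H3, fact H4, fact H8, fact H7)
    next
      case False
      define d where "d = Min (f ` A)"
      have dA: "\<forall>a\<in>A. d \<le> f a" unfolding d_def using fA by simp
      have d0: "0 < d" unfolding d_def using fA A(2) False f_nn
        by (subst Min_gr_iff) (auto simp: less_le)
      show ?thesis
      proof (cases "N = 0")
        case False
        then have "0 < N" by simp
        then have N7: "finite (carrier HN)" using N5 fG by simp
        have N8: "qN ` carrier HN \<subseteq> Q"
          using N6[rule_format, of d Q] fA d0 dA Q0 Qadd pQ fQ MQ by blast
        show ?thesis
          by (rule exI[of _ HN], rule exI[of _ qN], intro conjI, fact N1, fact N2, fact N3, fact N4, fact N7, fact N8)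
      next
        case True
        define m where "m = nat \<lceil>M1 / d\<rceil> + 2"
        have m2: "2 \<le> m" unfolding m_def by simp
        have mM: "M1 \<le> real (m - 1) * d"
        proof -
          have "M1 / d \<le> real (m - 1)" unfolding m_def by linarith
          then show ?thesis using d0 by (simp add: field_simps)
        qed
        have "real (m - 1) * d \<le> real m * d" using d0 by (intro mult_right_mono) auto
        then have mM2: "M1 \<le> real m * d" using mM by linarith
        have wdm: "wd G p A f m M1"
          by (intro wd.intro wd_axioms.intro vgG A f_nn kat1 kat2 fM pM M0) (use m2 in auto)
        interpret Wm: wd G p A f m M1 by (rule wdm)
        have wdkm: "wdk G p A f m M1"
        proof (intro wdk.intro wdk_axioms.intro wdm)
          fix u assume u: "Wm.wdd u" "length u = m" "Wm.allpos u"
          show "p (Wm.el u) \<le> Wm.wt u \<or> M1 \<le> Wm.wt u"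
            using Wm.wt_len[OF _ u(1), of d] dA u(2) mM2 by auto
        next
          fix u a assume u: "Wm.wdd u" "length u = m - 1" "Wm.allpos u" and a: "a \<in> A"
          have "M1 \<le> Wm.wt u" using Wm.wt_len[OF _ u(1), of d] dA u(2) mM by auto
          moreover have "0 \<le> p (a \<otimes> Wm.el u)" using p_nn Wm.el_closed u(1) a A by auto
          ultimately show "f a \<le> p (a \<otimes> Wm.el u) + Wm.wt u" using fM[OF a] by linarith
        qed
        have expom: "N \<noteq> 0 \<longrightarrow> (\<forall>x\<in>carrier G. x [^] N = \<one>) \<and> m dvd N" using True by simp
        note Bm = word_build[OF wdkm code sep Mr expom]
        obtain H :: "('a + real) monoid" and qq where H1: "in_class_G r N H qq" and H2: "bounded_value H qq"
          and H3: "enlarges H qq G p" and H4: "\<exists>b\<in>carrier H. \<forall>a\<in>A. f a = qq (Inl a \<otimes>\<^bsub>H\<^esub> inv\<^bsub>H\<^esub> b)"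
          and H5: "finite (carrier G) \<longrightarrow> 0 < m \<longrightarrow> finite (carrier H)"
          and H6: "\<forall>Q d. finite A \<and> 0 < d \<and> (\<forall>a\<in>A. d \<le> f a) \<and> 0 \<in> Q \<and> (\<forall>x\<in>Q \<inter> {0..}. \<forall>y\<in>Q \<inter> {0..}. x + y \<in> Q)
              \<and> p ` carrier G \<subseteq> Q \<and> f ` A \<subseteq> Q \<and> M1 \<in> Q \<longrightarrow> qq ` carrier H \<subseteq> Q"
          apply (insert Bm) apply (elim exE conjE) apply (rule that) apply assumption+ done
        have "0 < m" using m2 by simp
        then have H7: "finite (carrier H)" using H5 fG by simp
        have H8: "qq ` carrier H \<subseteq> Q"
          using H6[rule_format, of d Q] fA d0 dA Q0 Qadd pQ fQ MQ by blast
        show ?thesis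
          by (rule exI[of _ H], rule exI[of _ qq], intro conjI, fact H1, fact H2, fact H3, fact H4, fact H7, fact H8)
      qed
    qed
  qed
  show ?thesis
  proof (rule conjI[OF part1], intro allI impI)
    fix Q :: "real set" assume "{0..} \<subseteq> closure (Q \<inter> {0..}) \<and> 0 \<in> Q \<and>
            (\<forall>x\<in>Q \<inter> {0..}. \<forall>y\<in>Q \<inter> {0..}. x + y \<in> Q) \<and>
            finite (carrier G) \<and> p ` carrier G \<union> f ` A \<subseteq> Q"
    then show "\<exists>(H :: ('a + real) monoid) q. in_class_G r N H q \<and> bounded_value H q \<and>
                   enlarges H q G p \<and>
                   (\<exists>b\<in>carrier H. \<forall>a\<in>A. f a = q (Inl a \<otimes>\<^bsub>H\<^esub> inv\<^bsub>H\<^esub> b)) \<and>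
                   finite (carrier H) \<and> q ` carrier H \<subseteq> Q" by (rule part2)
  qed
qed

theorem theorem2p17:
  fixes r :: ereal and N :: nat and G :: "'a monoid" and p :: "'a \<Rightarrow> real"
    and A :: "'a set" and f :: "'a \<Rightarrow> real"
  assumes r: "r = 1 \<or> r = \<infinity>"
    and N: "N \<noteq> 1"
    and G: "in_class_G r N G p" and Gb: "bounded_value G p"
    and A: "A \<subseteq> carrier G" "A \<noteq> {}"
    and f: "E_r r G p A f"
    and cond: "N > 2 \<Longrightarrow> (\<forall>a. (\<forall>k\<in>{1..N}. a k \<in> A) \<longrightarrow>
               \<bar>p (finprod G a {1..N}) - f (a N)\<bar> \<le> (\<Sum>k=1..N-1. f (a k)))"
  shows "(\<exists>(H :: ('a + real) monoid) q. in_class_G r N H q \<and> bounded_value H q \<and>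
             enlarges H q G p \<and>
             (\<exists>b\<in>carrier H. \<forall>a\<in>A. f a = q (Inl a \<otimes>\<^bsub>H\<^esub> inv\<^bsub>H\<^esub> b)))
       \<and> (\<forall>Q :: real set.
            {0..} \<subseteq> closure (Q \<inter> {0..}) \<and> 0 \<in> Q \<and>
            (\<forall>x\<in>Q \<inter> {0..}. \<forall>y\<in>Q \<inter> {0..}. x + y \<in> Q) \<and>
            finite (carrier G) \<and> p ` carrier G \<union> f ` A \<subseteq> Q
            \<longrightarrow> (\<exists>(H :: ('a + real) monoid) q. in_class_G r N H q \<and> bounded_value H q \<and>
                   enlarges H q G p \<and>
                   (\<exists>b\<in>carrier H. \<forall>a\<in>A. f a = q (Inl a \<otimes>\<^bsub>H\<^esub> inv\<^bsub>H\<^esub> b)) \<and>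
                   finite (carrier H) \<and> q ` carrier H \<subseteq> Q))"
  apply (rule main_helper)
  apply (fact r)
  apply (fact N)
  apply (fact G)
  apply (fact Gb)
  apply (fact A(1))
  apply (fact A(2))
  apply (fact f)
  apply (rule cond, assumption)
  done

end
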